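(* Fix $s>0$. Let the opinion process $(O(t))_{t\ge0}$ be constructed from the marked Poisson process $(\mathcal N,\mathcal V)$ and an initial configuration $O(0)$ (with $O_j(0)=T_j$ for $j\in\partial\mathbb V$) as in the context, and let the backward walks $(R_{k,s}(t))_{t\le s}$, $k\in\overline{\mathbb V}$, be constructed from $(\mathcal N,\mathcal V,\mathcal U')$ as in the context. Then for every $k\in\overline{\mathbb V}$, almost surely, $O_k(s)=\mathbb E\left(O_{R_{k,s}(0)}(0)\,\middle|\,(\mathcal N,\mathcal V)\right).$
   Context: Graph: finite oriented graph $(\overline{\mathbb V},\overline E)$ with internal vertices $\mathbb V$, boundary vertices $\partial\mathbb V$, no edges between boundary vertices, boundary edges written $ij$ with $i\in\mathbb V$, $j\in\partial\mathbb V$; fixed boundary values $T_j>0$ for $j\in\partial\mathbb V$. Randomness: $\mathcal N=\bigcup_{ij\in\overline E}\mathcal N_{ij}$ where $(\mathcal N_{ij})$ are independent rate-1 Poisson processes on $\mathbb R$; each event $\tau\in\mathcal N$ carries two marks $V(\tau)$ and $U'(\tau)$, uniform on $[0,1]$; all marks are independent of each other and of $\mathcal N$. $\mathcal V=(V(\tau))$, $\mathcal U'=(U'(\tau))$. Opinion process construction: $O(t)$ is constant between events of $\mathcal N\cap(0,\infty)$; at $\tau\in\mathcal N_{ij}$, $\tau>0$, set $O_\ell(\tau)=V(\tau)O_i(\tau-)+(1-V(\tau))O_j(\tau-)$ for $\ell\in\{i,j\}\cap\mathbb V$ and $O_\ell(\tau)=O_\ell(\tau-)$ otherwise (boundary coordinates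 stay $T_j$). Backward walks: for $k\in\overline{\mathbb V}$, $R_{k,s}(s)=k$, and $t\mapsto R_{k,s}(t)$ (run backwards in time from $s$) changes only at event times $\tau\in\mathcal N\cap(-\infty,s]$: if $\tau\in\mathcal N_{ij}$ and the position just after $\tau$ (in forward time), $\ell:=R_{k,s}(\tau+)$, lies in $\{i,j\}$, then $R_{k,s}(\tau)=i$ if $\ell\in\mathbb V$ and $U'(\tau)<V(\tau)$; $R_{k,s}(\tau)=j$ if $\ell\in\mathbb V$ and $U'(\tau)>V(\tau)$; $R_{k,s}(\tau)=j$ if $\ell=j\in\partial\mathbb V$ (absorption at the boundary). If $\ell\notin\{i,j\}$ the position is unchanged. For $t\le s$, $R_{k,s}(t)$ equals its value at the earliest event time in $[t,s]$ that has been processed, i.e. $R_{k,s}(t)=R_{k,s}(\tau_t)$ with $\tau_t=\inf(\mathcal N\cap[t,s])$, and $R_{k,s}(t)=k$ if there is no such event. *)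

theory Defs
  imports "HOL-Probability.Probability"
begin

text \<open>Canonical realisation of the marked Poisson processes.
  A sample point assigns to every index (e, n), with e an edge and n an integer,
  a triple (gap, V-mark, U'-mark).\<close>

definition mark_dist :: "(real \<times> real \<times> real) measure" where
  "mark_dist = density lborel (exponential_density 1) \<Otimes>\<^sub>M
      (uniform_measure lborel {0..1} \<Otimes>\<^sub>M uniform_measure lborel {0..1})"

definition base_space :: "('e \<times> int) set \<Rightarrow> ('e \<times> int \<Rightarrow> real \<times> real \<times> real) measure" where
  "base_space I = (\<Pi>\<^sub>M x\<in>I. mark_dist)"

definition gap :: "('i \<Rightarrow> real \<times> real \<times> real) \<Rightarrow> 'i \<Rightarrow> real" where
  "gap \<omega> x = fst (\<omega> x)"

definition Vmark :: "('i \<Rightarrow> real \<times> real \<times> real) \<Rightarrow> 'i \<Rightarrow> real" where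
  "Vmark \<omega> x = fst (snd (\<omega> x))"

definition Umark :: "('i \<Rightarrow> real \<times> real \<times> real) \<Rightarrow> 'i \<Rightarrow> real" where
  "Umark \<omega> x = snd (snd (\<omega> x))"

text \<open>The n-th event time of the Poisson process on edge e: for n \<ge> 1 the n-th point
  in (0,\<infinity>), for n \<le> 0 the (1-n)-th point in (-\<infinity>,0] counted backwards from 0.\<close>
definition evtime :: "('e \<times> int \<Rightarrow> real \<times> real \<times> real) \<Rightarrow> 'e \<times> int \<Rightarrow> real" where
  "evtime \<omega> x = (case x of (e, n) \<Rightarrow>
     if n \<ge> 1 then (\<Sum>m\<in>{1..n}. gap \<omega> (e, m)) else - (\<Sum>m\<in>{n..0}. gap \<omega> (e, m)))"

definition edge_index :: "('v \<times> 'v) set \<Rightarrow> (('v \<times> 'v) \<times> int) set" where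
  "edge_index E = E \<times> (UNIV :: int set)"

definition events_O :: "('v \<times> 'v) set \<Rightarrow> real \<Rightarrow> (('v \<times> 'v) \<times> int \<Rightarrow> real \<times> real \<times> real)
    \<Rightarrow> (('v \<times> 'v) \<times> int) set" where
  "events_O E s \<omega> = {x \<in> edge_index E. 0 < evtime \<omega> x \<and> evtime \<omega> x \<le> s}"

definition events_R :: "('v \<times> 'v) set \<Rightarrow> real \<Rightarrow> (('v \<times> 'v) \<times> int \<Rightarrow> real \<times> real \<times> real)
    \<Rightarrow> (('v \<times> 'v) \<times> int) set" where
  "events_R E s \<omega> = {x \<in> edge_index E. 0 \<le> evtime \<omega> x \<and> evtime \<omega> x \<le> s}"

text \<open>A finite event set listed in increasing time order (ties, a null event, broken arbitrarily).\<close>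
definition sorted_events :: "('i \<Rightarrow> real) \<Rightarrow> 'i set \<Rightarrow> 'i list"
  where
  "sorted_events tm A = (if finite A then
      (SOME xs. distinct xs \<and> set xs = A \<and> sorted_wrt (\<lambda>x y. tm x \<le> tm y) xs) else [])"

definition opinion_update :: "'v set \<Rightarrow> real \<Rightarrow> 'v \<times> 'v \<Rightarrow> ('v \<Rightarrow> real) \<Rightarrow> ('v \<Rightarrow> real)" where
  "opinion_update Vin V ij c = (case ij of (i, j) \<Rightarrow>
     (\<lambda>l. if l \<in> {i, j} \<inter> Vin then V * c i + (1 - V) * c j else c l))"

definition opinion :: "'v set \<Rightarrow> ('v \<times> 'v) set \<Rightarrow> ('v \<Rightarrow> real) \<Rightarrow> real
    \<Rightarrow> (('v \<times> 'v) \<times> int \<Rightarrow> real \<times> real \<times> real) \<Rightarrow> ('v \<Rightarrow> real)" where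
  "opinion Vin E O0 s \<omega> =
     foldl (\<lambda>c x. opinion_update Vin (Vmark \<omega> x) (fst x) c) O0
       (sorted_events (evtime \<omega>) (events_O E s \<omega>))"

text \<open>One backward step of the walk at an event on edge ij with marks V, U'
  (the tie U' = V is a null event and is resolved towards j).\<close>
definition walk_step :: "'v set \<Rightarrow> real \<Rightarrow> real \<Rightarrow> 'v \<times> 'v \<Rightarrow> 'v \<Rightarrow> 'v" where
  "walk_step Vin V U ij l = (case ij of (i, j) \<Rightarrow>
     if l = i \<or> l = j then (if l \<in> Vin then (if U < V then i else j) else j) else l)"

text \<open>R_{k,s}(0): start at k at time s and process the events of [0,s] from latest to earliest.\<close>
definition backward_walk :: "'v set \<Rightarrow> ('v \<times> 'v) set \<Rightarrow> real \<Rightarrow> 'v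
    \<Rightarrow> (('v \<times> 'v) \<times> int \<Rightarrow> real \<times> real \<times> real) \<Rightarrow> 'v" where
  "backward_walk Vin E s k \<omega> =
     foldr (\<lambda>x l. walk_step Vin (Vmark \<omega> x) (Umark \<omega> x) (fst x) l)
       (sorted_events (evtime \<omega>) (events_R E s \<omega>)) k"

definition NV_algebra :: "('v \<times> 'v) set \<Rightarrow> (('v \<times> 'v) \<times> int \<Rightarrow> real \<times> real \<times> real) measure" where
  "NV_algebra E = vimage_algebra (space (base_space (edge_index E)))
     (\<lambda>\<omega>. (\<lambda>x\<in>edge_index E. evtime \<omega> x, \<lambda>x\<in>edge_index E. Vmark \<omega> x))
     ((\<Pi>\<^sub>M x\<in>edge_index E. (borel :: real measure)) \<Otimes>\<^sub>M (\<Pi>\<^sub>M x\<in>edge_index E. (borel :: real measure)))"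

end

theory Submission
  imports Defs
begin

lemma sets_mark_dist: "sets mark_dist = sets (borel \<Otimes>\<^sub>M (borel \<Otimes>\<^sub>M (borel::real measure)))"
  unfolding mark_dist_def by (intro sets_pair_measure_cong) auto

lemma space_mark_dist[simp]: "space mark_dist = UNIV"
  unfolding mark_dist_def by (simp add: space_pair_measure)

lemma prob_mark: "prob_space mark_dist"
  unfolding mark_dist_def
  by (intro prob_space_pair prob_space_exponential_density prob_space_uniform_measure) auto

lemma prob_base: "prob_space (base_space I)"
  unfolding base_space_def by (intro prob_space_PiM prob_mark)

lemma meas_coord[measurable]:
  "x \<in> I \<Longrightarrow> (\<lambda>\<omega>. \<omega> x) \<in> measurable (base_space I) (borel \<Otimes>\<^sub>M (borel \<Otimes>\<^sub>M (borel::real measure)))"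
  unfolding base_space_def
  using measurable_component_singleton[of x I "\<lambda>_. mark_dist"]
  by (simp add: measurable_cong_sets[OF refl sets_mark_dist])

lemma meas_gap[measurable]: "x \<in> I \<Longrightarrow> (\<lambda>\<omega>. gap \<omega> x) \<in> borel_measurable (base_space I)"
  unfolding gap_def by measurable
lemma meas_V[measurable]: "x \<in> I \<Longrightarrow> (\<lambda>\<omega>. Vmark \<omega> x) \<in> borel_measurable (base_space I)"
  unfolding Vmark_def by measurable
lemma meas_U[measurable]: "x \<in> I \<Longrightarrow> (\<lambda>\<omega>. Umark \<omega> x) \<in> borel_measurable (base_space I)"
  unfolding Umark_def by measurable

lemma meas_evtime[measurable]: "x \<in> edge_index E \<Longrightarrow> (\<lambda>\<omega>. evtime \<omega> x) \<in> borel_measurable (base_space (edge_index E))"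
  unfolding evtime_def
  apply (cases x)
  apply (auto simp: edge_index_def)
  apply measurable
  done

definition "ExD = density lborel (exponential_density (1::real))"
definition "UnD = uniform_measure lborel {0..1::real}"

lemma mark_dist_eq: "mark_dist = ExD \<Otimes>\<^sub>M (UnD \<Otimes>\<^sub>M UnD)"
  unfolding mark_dist_def ExD_def UnD_def ..

lemma prob_ExD: "prob_space ExD" unfolding ExD_def by (simp add: prob_space_exponential_density)
lemma prob_UnD: "prob_space UnD" unfolding UnD_def by (intro prob_space_uniform_measure) auto
lemma sets_ExD[measurable_cong, simp]: "sets ExD = sets borel" unfolding ExD_def by simp
lemma sets_UnD[measurable_cong, simp]: "sets UnD = sets borel" unfolding UnD_def by simp
lemma space_ExD[simp]: "space ExD = UNIV" unfolding ExD_def by simp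
lemma space_UnD[simp]: "space UnD = UNIV" unfolding UnD_def by simp

lemma measure_UnD_1[simp]: "measure UnD UNIV = 1"
  using prob_space.prob_space[OF prob_UnD] by simp

lemma mark_integrate_U:
  fixes K :: "real \<times> real \<times> real \<Rightarrow> real"
  assumes Km: "K \<in> borel_measurable (borel \<Otimes>\<^sub>M (borel \<Otimes>\<^sub>M borel))" and Kb: "\<And>m. \<bar>K m\<bar> \<le> B"
  shows "(\<integral>m. K m \<partial>mark_dist) = (\<integral>m. (\<integral>u. K (fst m, fst (snd m), u) \<partial>UnD) \<partial>mark_dist)"
proof -
  interpret E: prob_space ExD by (rule prob_ExD)
  interpret U: prob_space UnD by (rule prob_UnD)
  interpret UU: prob_space "UnD \<Otimes>\<^sub>M UnD" by (intro prob_space_pair prob_UnD)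
  interpret P1: pair_sigma_finite ExD "UnD \<Otimes>\<^sub>M UnD" by unfold_locales
  interpret P2: pair_sigma_finite UnD UnD by unfold_locales
  interpret P: prob_space "ExD \<Otimes>\<^sub>M (UnD \<Otimes>\<^sub>M UnD)" by (intro prob_space_pair prob_UnD prob_ExD)
  have Km': "K \<in> borel_measurable (ExD \<Otimes>\<^sub>M (UnD \<Otimes>\<^sub>M UnD))"
    using Km by (simp add: measurable_cong_sets[OF sets_pair_measure_cong[OF sets_ExD sets_pair_measure_cong[OF sets_UnD sets_UnD]] refl])
  define R where "R (m::real\<times>real\<times>real) = (\<integral>u. K (fst m, fst (snd m), u) \<partial>UnD)" for m
  have Rm: "R \<in> borel_measurable (ExD \<Otimes>\<^sub>M (UnD \<Otimes>\<^sub>M UnD))"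
    unfolding R_def using Km' by measurable
  have Rb: "\<bar>R m\<bar> \<le> B" for m
  proof -
    have "\<bar>R m\<bar> \<le> (\<integral>u. \<bar>K (fst m, fst (snd m), u)\<bar> \<partial>UnD)"
      unfolding R_def by (rule integral_abs_bound)
    also have "\<dots> \<le> (\<integral>u. B \<partial>UnD)"
      apply (rule integral_mono)
      apply (rule U.integrable_const_bound[where B=B])
      using Kb Km apply auto
      done
    finally show ?thesis by simp
  qed
  have int1: "integrable (ExD \<Otimes>\<^sub>M (UnD \<Otimes>\<^sub>M UnD)) K"
    by (rule P.integrable_const_bound[where B=B]) (use Kb Km' in auto)
  have int2: "integrable (ExD \<Otimes>\<^sub>M (UnD \<Otimes>\<^sub>M UnD)) R"
    by (rule P.integrable_const_bound[where B=B]) (use Rb Rm in auto)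
  have inner: "(\<integral>p. K (a, p) \<partial>(UnD \<Otimes>\<^sub>M UnD)) = (\<integral>p. R (a, p) \<partial>(UnD \<Otimes>\<^sub>M UnD))" for a
  proof -
    have iK: "integrable (UnD \<Otimes>\<^sub>M UnD) (\<lambda>p. K (a, p))"
      by (rule UU.integrable_const_bound[where B=B]) (use Kb Km' in auto)
    have iR: "integrable (UnD \<Otimes>\<^sub>M UnD) (\<lambda>p. R (a, p))"
      by (rule UU.integrable_const_bound[where B=B]) (use Rb Rm in auto)
    have "(\<integral>p. K (a, p) \<partial>(UnD \<Otimes>\<^sub>M UnD)) = (\<integral>v. (\<integral>u. K (a, v, u) \<partial>UnD) \<partial>UnD)"
      using P2.integral_fst'[OF iK] by simp
    also have "\<dots> = (\<integral>v. (\<integral>u'. R (a, v, u') \<partial>UnD) \<partial>UnD)"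
      by (simp add: R_def)
    also have "\<dots> = (\<integral>p. R (a, p) \<partial>(UnD \<Otimes>\<^sub>M UnD))"
      using P2.integral_fst'[OF iR] by simp
    finally show ?thesis .
  qed
  have "(\<integral>m. K m \<partial>mark_dist) = (\<integral>a. (\<integral>p. K (a, p) \<partial>(UnD \<Otimes>\<^sub>M UnD)) \<partial>ExD)"
    unfolding mark_dist_eq using P1.integral_fst'[OF int1] by simp
  also have "\<dots> = (\<integral>a. (\<integral>p. R (a, p) \<partial>(UnD \<Otimes>\<^sub>M UnD)) \<partial>ExD)"
    by (simp add: inner)
  also have "\<dots> = (\<integral>m. R m \<partial>mark_dist)"
    unfolding mark_dist_eq using P1.integral_fst'[OF int2] by simp
  finally show ?thesis unfolding R_def .
qed

lemma UnD_lt: "(\<integral>u. (if u < v then 1 else 0) \<partial>UnD) = min 1 (max 0 (v::real))"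
proof -
  interpret U: prob_space UnD by (rule prob_UnD)
  have "(\<integral>u. (if u < v then 1 else 0) \<partial>UnD) = (\<integral>u. indicator {..<v} u \<partial>UnD)"
    by (intro Bochner_Integration.integral_cong) (auto simp: indicator_def)
  also have "\<dots> = measure UnD {..<v}"
    by (simp add: U.emeasure_eq_measure)
  also have "\<dots> = measure lborel ({0..1} \<inter> {..<v})"
    unfolding UnD_def by (subst measure_uniform_measure) auto
  also have "\<dots> = min 1 (max 0 v)"
  proof (cases "v \<le> 0")
    case True then have "{0..1} \<inter> {..<v} = ({}::real set)" by auto
    then show ?thesis using True by simp
  next
    case False
    show ?thesis
    proof (cases "v \<le> 1")
      case True then have "{0..1} \<inter> {..<v} = {0..<v}" using False by auto
      then show ?thesis using True False by simp
    next
      case F2: False then have "{0..1} \<inter> {..<v} = {0..1}" by auto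
      then show ?thesis using F2 by simp
    qed
  qed
  finally show ?thesis .
qed

definition "clip v = min 1 (max 0 (v::real))"

lemma split_integral:
  fixes h :: "('e \<times> int \<Rightarrow> real \<times> real \<times> real) \<Rightarrow> real"
  assumes x: "x \<in> I" and hm: "h \<in> borel_measurable (base_space I)" and hb: "\<And>\<omega>. \<bar>h \<omega>\<bar> \<le> B"
  shows "(\<integral>\<omega>. h \<omega> \<partial>base_space I) =
    (\<integral>X. (\<integral>m. h (X(x := m)) \<partial>mark_dist) \<partial>(\<Pi>\<^sub>M i\<in>I-{x}. mark_dist))"
proof -
  let ?P = "\<Pi>\<^sub>M i\<in>I-{x}. mark_dist"
  interpret Mk: prob_space mark_dist by (rule prob_mark)
  interpret PP: prob_space ?P by (intro prob_space_PiM prob_mark)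
  interpret PS: pair_sigma_finite mark_dist ?P by unfold_locales
  interpret PR: prob_space "mark_dist \<Otimes>\<^sub>M ?P" by (intro prob_space_pair prob_mark prob_space_PiM)
  have ins: "insert x (I - {x}) = I" using x by auto
  have D: "distr (mark_dist \<Otimes>\<^sub>M ?P) (base_space I) (\<lambda>(m, X). X(x := m)) = base_space I"
    using distr_pair_PiM_eq_PiM[of "I-{x}" "\<lambda>_. mark_dist" x] prob_mark
    unfolding base_space_def ins by simp
  have Psi: "(\<lambda>(m, X). X(x := m)) \<in> measurable (mark_dist \<Otimes>\<^sub>M ?P) (base_space I)"
  proof -
    have "(\<lambda>p. (snd p, fst p)) \<in> measurable (mark_dist \<Otimes>\<^sub>M ?P) (?P \<Otimes>\<^sub>M mark_dist)" by measurable
    from measurable_compose[OF this measurable_add_dim[of x "I-{x}" "\<lambda>_. mark_dist"]]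
    show ?thesis unfolding base_space_def ins by (simp add: case_prod_beta)
  qed
  have hPsi: "(\<lambda>(m, X). h (X(x := m))) \<in> borel_measurable (mark_dist \<Otimes>\<^sub>M ?P)"
    using measurable_compose[OF Psi hm] by (simp add: case_prod_beta)
  have int: "integrable (mark_dist \<Otimes>\<^sub>M ?P) (\<lambda>(m, X). h (X(x := m)))"
    by (rule PR.integrable_const_bound[where B=B]) (use hb hPsi in auto)
  have "(\<integral>\<omega>. h \<omega> \<partial>base_space I) = (\<integral>p. h ((\<lambda>(m, X). X(x := m)) p) \<partial>(mark_dist \<Otimes>\<^sub>M ?P))"
    by (subst D[symmetric], rule integral_distr[OF Psi hm])
  also have "\<dots> = (\<integral>p. (\<lambda>(m, X). h (X(x := m))) p \<partial>(mark_dist \<Otimes>\<^sub>M ?P))"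
    by (intro Bochner_Integration.integral_cong) (auto split: prod.split)
  also have "\<dots> = (\<integral>X. (\<integral>m. h (X(x := m)) \<partial>mark_dist) \<partial>?P)"
    using PS.integral_snd[of "\<lambda>m X. h (X(x := m))", OF int] by simp
  finally show ?thesis .
qed

lemma upd_space:
  assumes "X \<in> space (\<Pi>\<^sub>M i\<in>I-{x}. mark_dist)" "x \<in> I"
  shows "X(x := m) \<in> space (base_space I)"
  using assms unfolding base_space_def by (auto simp: space_PiM PiE_iff extensional_def)

lemma upd_meas:
  assumes "X \<in> space (\<Pi>\<^sub>M i\<in>I-{x}. mark_dist)" "x \<in> I"
    and g: "g \<in> measurable N mark_dist"
  shows "(\<lambda>m. X(x := g m)) \<in> measurable N (base_space I)"
proof -
  have ins: "insert x (I - {x}) = I" using assms by auto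
  have "(\<lambda>m. (X, g m)) \<in> measurable N ((\<Pi>\<^sub>M i\<in>I-{x}. mark_dist) \<Otimes>\<^sub>M mark_dist)"
    using assms by measurable
  from measurable_compose[OF this measurable_add_dim[of x "I-{x}" "\<lambda>_. mark_dist"]]
  show ?thesis unfolding base_space_def ins by simp
qed

lemma clip_bound: "\<bar>clip v\<bar> \<le> 1" unfolding clip_def by auto

lemma Ulemma:
  fixes \<phi> :: "('e \<times> int \<Rightarrow> real \<times> real \<times> real) \<Rightarrow> real"
  assumes x: "x \<in> I" and \<phi>m: "\<phi> \<in> borel_measurable (base_space I)" and \<phi>b: "\<And>\<omega>. \<bar>\<phi> \<omega>\<bar> \<le> B"
    and inv: "\<And>w u. w \<in> space (base_space I) \<Longrightarrow> \<phi> (w(x := (gap w x, Vmark w x, u))) = \<phi> w"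
  shows "(\<integral>\<omega>. \<phi> \<omega> * (if Umark \<omega> x < Vmark \<omega> x then 1 else 0) \<partial>base_space I) =
         (\<integral>\<omega>. \<phi> \<omega> * clip (Vmark \<omega> x) \<partial>base_space I)"
proof -
  let ?P = "\<Pi>\<^sub>M i\<in>I-{x}. mark_dist"
  have B0: "0 \<le> B" using \<phi>b[of undefined] by linarith
  have b1: "\<bar>\<phi> \<omega> * (if Umark \<omega> x < Vmark \<omega> x then 1 else 0)\<bar> \<le> B" for \<omega>
    using \<phi>b[of \<omega>] B0 by (auto simp: abs_mult)
  have b2: "\<bar>\<phi> \<omega> * clip (Vmark \<omega> x)\<bar> \<le> B" for \<omega>
  proof -
    have "\<bar>\<phi> \<omega>\<bar> * \<bar>clip (Vmark \<omega> x)\<bar> \<le> B * 1"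
      by (rule mult_mono) (use \<phi>b[of \<omega>] clip_bound[of "Vmark \<omega> x"] B0 in auto)
    then show ?thesis by (simp add: abs_mult)
  qed
  have m1: "(\<lambda>\<omega>. \<phi> \<omega> * (if Umark \<omega> x < Vmark \<omega> x then 1 else 0)) \<in> borel_measurable (base_space I)"
    using x \<phi>m by measurable
  have m2: "(\<lambda>\<omega>. \<phi> \<omega> * clip (Vmark \<omega> x)) \<in> borel_measurable (base_space I)"
    using x \<phi>m unfolding clip_def by measurable
  have inner: "(\<integral>m. \<phi> (X(x := m)) * (if Umark (X(x := m)) x < Vmark (X(x := m)) x then 1 else 0) \<partial>mark_dist)
      = (\<integral>m. \<phi> (X(x := m)) * clip (Vmark (X(x := m)) x) \<partial>mark_dist)"
    if X: "X \<in> space ?P" for X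
  proof -
    define \<psi> where "\<psi> a v = \<phi> (X(x := (a, v, 0)))" for a v
    have inv': "\<phi> (X(x := m)) = \<psi> (fst m) (fst (snd m))" for m
      using inv[OF upd_space[OF X x], of m 0] unfolding \<psi>_def
      by (simp add: gap_def Vmark_def)
    have \<psi>m: "(\<lambda>m. \<psi> (fst m) (fst (snd m))) \<in> borel_measurable (borel \<Otimes>\<^sub>M (borel \<Otimes>\<^sub>M borel))"
    proof -
      have "(\<lambda>m. (fst m, fst (snd m), 0::real)) \<in> measurable (borel \<Otimes>\<^sub>M (borel \<Otimes>\<^sub>M borel)) mark_dist"
        by (simp add: measurable_cong_sets[OF refl sets_mark_dist])
      from measurable_compose[OF upd_meas[OF X x this] \<phi>m] show ?thesis unfolding \<psi>_def .
    qed
    define K where "K m = \<psi> (fst m) (fst (snd m)) * (if snd (snd m) < fst (snd m) then 1 else 0)" for m :: "real \<times> real \<times> real"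
    have Km: "K \<in> borel_measurable (borel \<Otimes>\<^sub>M (borel \<Otimes>\<^sub>M borel))"
      unfolding K_def using \<psi>m by measurable
    have Kb: "\<bar>K m\<bar> \<le> B" for m
      unfolding K_def \<psi>_def using \<phi>b B0 by (auto simp: abs_mult)
    have "(\<integral>m. \<phi> (X(x := m)) * (if Umark (X(x := m)) x < Vmark (X(x := m)) x then 1 else 0) \<partial>mark_dist)
        = (\<integral>m. K m \<partial>mark_dist)"
      by (simp add: K_def inv' Umark_def Vmark_def)
    also have "\<dots> = (\<integral>m. (\<integral>u. K (fst m, fst (snd m), u) \<partial>UnD) \<partial>mark_dist)"
      by (rule mark_integrate_U[OF Km Kb])
    also have "\<dots> = (\<integral>m. \<psi> (fst m) (fst (snd m)) * clip (fst (snd m)) \<partial>mark_dist)"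
      by (simp add: K_def UnD_lt clip_def)
    also have "\<dots> = (\<integral>m. \<phi> (X(x := m)) * clip (Vmark (X(x := m)) x) \<partial>mark_dist)"
      by (simp add: inv' Vmark_def)
    finally show ?thesis .
  qed
  show ?thesis
    apply (subst split_integral[OF x m1 b1])
    apply (subst split_integral[OF x m2 b2])
    apply (rule Bochner_Integration.integral_cong[OF refl])
    apply (erule inner)
    done
qed

definition walkL :: "'v set \<Rightarrow> (('v \<times> 'v) \<times> int) list \<Rightarrow> (('v \<times> 'v) \<times> int \<Rightarrow> real \<times> real \<times> real) \<Rightarrow> 'v \<Rightarrow> 'v" where
  "walkL Vin L w k = foldr (\<lambda>x l. walk_step Vin (Vmark w x) (Umark w x) (fst x) l) L k"

definition foldO :: "'v set \<Rightarrow> (('v \<times> 'v) \<times> int) list \<Rightarrow> (('v \<times> 'v) \<times> int \<Rightarrow> real \<times> real \<times> real) \<Rightarrow> ('v \<Rightarrow> real) \<Rightarrow> 'v \<Rightarrow> real" where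
  "foldO Vin L w c = foldl (\<lambda>c x. opinion_update Vin (Vmark w x) (fst x) c) c L"

lemma walkL_Nil[simp]: "walkL Vin [] w k = k" by (simp add: walkL_def)
lemma walkL_Cons: "walkL Vin (x # xs) w k = walk_step Vin (Vmark w x) (Umark w x) (fst x) (walkL Vin xs w k)"
  by (simp add: walkL_def)
lemma walkL_snoc: "walkL Vin (xs @ [y]) w k = walkL Vin xs w (walk_step Vin (Vmark w y) (Umark w y) (fst y) k)"
  by (simp add: walkL_def)
lemma foldO_Nil[simp]: "foldO Vin [] w c = c" by (simp add: foldO_def)
lemma foldO_snoc: "foldO Vin (xs @ [y]) w c = opinion_update Vin (Vmark w y) (fst y) (foldO Vin xs w c)"
  by (simp add: foldO_def)

lemma walkL_meas:
  assumes "set L \<subseteq> I"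
  shows "(\<lambda>w. walkL Vin L w k) \<in> measurable (base_space I) (count_space UNIV)"
  using assms
proof (induction L)
  case Nil then show ?case by simp
next
  case (Cons x xs)
  then have x: "x \<in> I" and f: "(\<lambda>w. walkL Vin xs w k) \<in> measurable (base_space I) (count_space UNIV)" by auto
  obtain i j where ij: "fst x = (i, j)" by fastforce
  have s1: "{w \<in> space (base_space I). walkL Vin xs w k = i \<or> walkL Vin xs w k = j} \<in> sets (base_space I)"
    using measurable_sets[OF f, of "{i, j}"] by (simp add: vimage_def Int_def conj_commute)
  have s2: "{w \<in> space (base_space I). walkL Vin xs w k \<in> Vin} \<in> sets (base_space I)"
    using measurable_sets[OF f, of "Vin"] by (simp add: vimage_def Int_def conj_commute)
  have s3: "{w \<in> space (base_space I). Umark w x < Vmark w x} \<in> sets (base_space I)"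
    using x by measurable
  show ?case
    unfolding walkL_Cons ij walk_step_def
    by (simp, intro measurable_If f s1 s2 s3 measurable_const) auto
qed

lemma foldO_meas:
  assumes "set L \<subseteq> I"
  shows "(\<lambda>w. foldO Vin L w c l) \<in> borel_measurable (base_space I)"
  using assms
proof (induction L arbitrary: l rule: rev_induct)
  case Nil then show ?case by simp
next
  case (snoc y xs)
  then have y: "y \<in> I" and [measurable]: "\<And>l. (\<lambda>w. foldO Vin xs w c l) \<in> borel_measurable (base_space I)" by auto
  obtain i j where ij: "fst y = (i, j)" by fastforce
  show ?case
    unfolding foldO_snoc ij opinion_update_def using y by simp measurable
qed

lemma Vmark_updU[simp]: "Vmark (w(x := (gap w x, Vmark w x, u))) z = Vmark w z"
  by (simp add: Vmark_def)
lemma gap_updU[simp]: "gap (w(x := (gap w x, Vmark w x, u))) z = gap w z"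
  by (simp add: gap_def)

lemma walkL_upd: "y \<notin> set L \<Longrightarrow> walkL Vin L (w(y := m)) k = walkL Vin L w k"
  by (induction L) (auto simp: walkL_Cons Vmark_def Umark_def)

lemma foldO_updU: "foldO Vin L (w(x := (gap w x, Vmark w x, u))) c = foldO Vin L w c"
  unfolding foldO_def by simp

lemma integrable_bdd:
  fixes f :: "('e \<times> int \<Rightarrow> real \<times> real \<times> real) \<Rightarrow> real"
  assumes "f \<in> borel_measurable (base_space I)" "\<And>w. \<bar>f w\<bar> \<le> C"
  shows "integrable (base_space I) f"
proof -
  interpret prob_space "base_space I" by (rule prob_base)
  show ?thesis by (rule integrable_const_bound[where B=C]) (use assms in auto)
qed

lemma foldO_bound:
  assumes "\<forall>x\<in>set L. 0 \<le> Vmark w x \<and> Vmark w x \<le> 1" "\<And>v. \<bar>c v\<bar> \<le> Bc"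
  shows "\<bar>foldO Vin L w c l\<bar> \<le> Bc"
  using assms(1)
proof (induction L arbitrary: l rule: rev_induct)
  case Nil then show ?case using assms(2) by simp
next
  case (snoc y xs)
  obtain i j where ij: "fst y = (i, j)" by fastforce
  let ?v = "Vmark w y"
  have v: "0 \<le> ?v" "?v \<le> 1" using snoc.prems by auto
  have IH: "\<And>l. \<bar>foldO Vin xs w c l\<bar> \<le> Bc" using snoc by auto
  have "\<bar>?v * foldO Vin xs w c i + (1 - ?v) * foldO Vin xs w c j\<bar> \<le> ?v * Bc + (1 - ?v) * Bc"
  proof -
    have "\<bar>?v * foldO Vin xs w c i + (1 - ?v) * foldO Vin xs w c j\<bar> \<le> \<bar>?v * foldO Vin xs w c i\<bar> + \<bar>(1 - ?v) * foldO Vin xs w c j\<bar>"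
      by (rule abs_triangle_ineq)
    also have "\<dots> = ?v * \<bar>foldO Vin xs w c i\<bar> + (1 - ?v) * \<bar>foldO Vin xs w c j\<bar>"
      using v by (simp add: abs_mult)
    also have "\<dots> \<le> ?v * Bc + (1 - ?v) * Bc"
      using v IH by (intro add_mono mult_left_mono) auto
    finally show ?thesis .
  qed
  then show ?case
    unfolding foldO_snoc ij opinion_update_def using IH by (auto simp: algebra_simps)
qed

lemma core:
  fixes H :: "(('v \<times> 'v) \<times> int \<Rightarrow> real \<times> real \<times> real) \<Rightarrow> real" and c :: "'v \<Rightarrow> real"
  assumes "set L \<subseteq> I" "distinct L"
    and "\<forall>x\<in>set L. fst (fst x) \<in> Vin"
    and "H \<in> borel_measurable (base_space I)" "\<And>w. \<bar>H w\<bar> \<le> BH"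
    and "\<And>x w u. x \<in> I \<Longrightarrow> w \<in> space (base_space I) \<Longrightarrow> H (w(x := (gap w x, Vmark w x, u))) = H w"
    and "\<And>w x. H w \<noteq> 0 \<Longrightarrow> x \<in> I \<Longrightarrow> 0 \<le> Vmark w x \<and> Vmark w x \<le> 1"
    and cb: "\<And>v. \<bar>c v\<bar> \<le> Bc"
  shows "(\<integral>w. H w * c (walkL Vin L w k) \<partial>base_space I) = (\<integral>w. H w * foldO Vin L w c k \<partial>base_space I)"
  using assms(1-7)
proof (induction L arbitrary: k H BH rule: rev_induct)
  case Nil then show ?case by simp
next
  case (snoc y xs)
  note Hm = snoc.prems(4) and Hb = snoc.prems(5) and Hinv = snoc.prems(6) and Hsupp = snoc.prems(7)
  have y: "y \<in> I" and xsI: "set xs \<subseteq> I" and dxs: "distinct xs" and yxs: "y \<notin> set xs"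
    and exs: "\<forall>x\<in>set xs. fst (fst x) \<in> Vin" and ey: "fst (fst y) \<in> Vin"
    using snoc.prems by auto
  obtain i j where ij: "fst y = (i, j)" by fastforce
  have iV: "i \<in> Vin" using ey ij by simp
  let ?M = "base_space I"
  define W where "W a w = walkL Vin xs w a" for a w
  define F where "F a w = foldO Vin xs w c a" for a w
  have Wm[measurable]: "(\<lambda>w. c (W a w)) \<in> borel_measurable ?M" for a
  proof -
    have "c \<in> measurable (count_space UNIV) borel" by simp
    then show ?thesis unfolding W_def by (rule measurable_compose[OF walkL_meas[OF xsI]])
  qed
  have Fm[measurable]: "(\<lambda>w. F a w) \<in> borel_measurable ?M" for a
    unfolding F_def using foldO_meas[OF xsI] by auto
  have [measurable]: "H \<in> borel_measurable ?M" by (rule Hm)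
  have Bc0: "0 \<le> Bc" using cb[of undefined] by linarith
  have BH0: "0 \<le> BH" using Hb[of undefined] by linarith
  have IH: "(\<integral>w. H' w * c (W a w) \<partial>?M) = (\<integral>w. H' w * F a w \<partial>?M)"
    if "H' \<in> borel_measurable ?M" "\<And>w. \<bar>H' w\<bar> \<le> BH"
      "\<And>x w u. x \<in> I \<Longrightarrow> w \<in> space ?M \<Longrightarrow> H' (w(x := (gap w x, Vmark w x, u))) = H' w"
      "\<And>w x. H' w \<noteq> 0 \<Longrightarrow> x \<in> I \<Longrightarrow> 0 \<le> Vmark w x \<and> Vmark w x \<le> 1" for H' a
    unfolding W_def F_def using snoc.IH[OF xsI dxs exs that] .
  have Fb: "\<bar>H' w * F a w\<bar> \<le> BH * Bc"
    if "\<And>w. \<bar>H' w\<bar> \<le> BH" "\<And>w x. H' w \<noteq> 0 \<Longrightarrow> x \<in> I \<Longrightarrow> 0 \<le> Vmark w x \<and> Vmark w x \<le> 1" for H' a w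
  proof (cases "H' w = 0")
    case True then show ?thesis using BH0 Bc0 by simp
  next
    case False
    have "\<bar>F a w\<bar> \<le> Bc" unfolding F_def
      by (rule foldO_bound[OF _ cb]) (use that(2)[OF False] xsI in auto)
    then have "\<bar>H' w\<bar> * \<bar>F a w\<bar> \<le> BH * Bc" by (intro mult_mono that(1)) (auto simp: BH0)
    then show ?thesis by (simp add: abs_mult)
  qed
  have Wb: "\<bar>H' w * c (W a w)\<bar> \<le> BH * Bc" if "\<And>w. \<bar>H' w\<bar> \<le> BH" for H' a w
  proof -
    have "\<bar>H' w\<bar> * \<bar>c (W a w)\<bar> \<le> BH * Bc" by (intro mult_mono that cb) (auto simp: BH0)
    then show ?thesis by (simp add: abs_mult)
  qed
  show ?case
  proof (cases "k = i \<or> k = j")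
    case False
    then have "walk_step Vin (Vmark w y) (Umark w y) (fst y) k = k"
      "opinion_update Vin (Vmark w y) (fst y) g k = g k" for w g
      by (auto simp: ij walk_step_def opinion_update_def)
    then show ?thesis
      unfolding walkL_snoc foldO_snoc using IH[OF Hm Hb Hinv Hsupp] by (simp add: W_def F_def)
  next
    case kij: True
    show ?thesis
    proof (cases "k \<in> Vin")
      case False
      then have kj: "k = j" using kij iV by auto
      then have "walk_step Vin (Vmark w y) (Umark w y) (fst y) k = j"
        "opinion_update Vin (Vmark w y) (fst y) g k = g j" for w g
        using False by (auto simp: ij walk_step_def opinion_update_def)
      then show ?thesis
        unfolding walkL_snoc foldO_snoc using IH[OF Hm Hb Hinv Hsupp] by (simp add: W_def F_def)
    next
      case True
      define ind where "ind w = (if Umark w y < Vmark w y then 1 else 0 :: real)" for w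
      define H' where "H' w = H w * Vmark w y" for w
      have ws: "walk_step Vin (Vmark w y) (Umark w y) (fst y) k = (if Umark w y < Vmark w y then i else j)" for w
        using True kij by (auto simp: ij walk_step_def)
      have ou: "opinion_update Vin (Vmark w y) (fst y) g k = Vmark w y * g i + (1 - Vmark w y) * g j" for w g
        using True kij by (auto simp: ij opinion_update_def)
      have H'm[measurable]: "H' \<in> borel_measurable ?M" unfolding H'_def using y by measurable
      have H'b: "\<bar>H' w\<bar> \<le> BH" for w
      proof (cases "H w = 0")
        case True then show ?thesis by (simp add: H'_def BH0)
      next
        case False
        have "\<bar>H w\<bar> * \<bar>Vmark w y\<bar> \<le> BH * 1" using Hsupp[OF False y] Hb[of w] BH0 by (intro mult_mono) auto
        then show ?thesis by (simp add: H'_def abs_mult)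
      qed
      have H'inv: "H' (w(x := (gap w x, Vmark w x, u))) = H' w" if "x \<in> I" "w \<in> space ?M" for x w u
        unfolding H'_def Vmark_updU Hinv[OF that] ..
      have H'supp: "0 \<le> Vmark w x \<and> Vmark w x \<le> 1" if "H' w \<noteq> 0" "x \<in> I" for w x
        using Hsupp[OF _ that(2), of w] that(1) by (auto simp: H'_def)
      have indm[measurable]: "ind \<in> borel_measurable ?M" unfolding ind_def using y by measurable
      have indb: "\<bar>ind w\<bar> \<le> 1" for w by (simp add: ind_def)
      have pw: "H w * c (walkL Vin (xs @ [y]) w k) = H w * c (W i w) * ind w + (H w * c (W j w) - H w * c (W j w) * ind w)" for w
        unfolding walkL_snoc ws by (simp add: W_def ind_def)
      have pw2: "H w * foldO Vin (xs @ [y]) w c k = H' w * F i w + (H w * F j w - H' w * F j w)" for w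
        unfolding foldO_snoc ou by (simp add: F_def H'_def algebra_simps)
      have Ul: "(\<integral>w. H w * c (W a w) * ind w \<partial>?M) = (\<integral>w. H' w * c (W a w) \<partial>?M)" for a
      proof -
        have "(\<integral>w. H w * c (W a w) * ind w \<partial>?M) = (\<integral>w. H w * c (W a w) * clip (Vmark w y) \<partial>?M)"
          unfolding ind_def
        proof (rule Ulemma[OF y, where B="BH * Bc"])
          show "(\<lambda>w. H w * c (W a w)) \<in> borel_measurable ?M" by measurable
          show "\<bar>H w * c (W a w)\<bar> \<le> BH * Bc" for w by (rule Wb[OF Hb])
          show "H (w(y := (gap w y, Vmark w y, u))) * c (W a (w(y := (gap w y, Vmark w y, u)))) = H w * c (W a w)"
            if "w \<in> space ?M" for w u
            unfolding Hinv[OF y that] W_def walkL_upd[OF yxs] ..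
        qed
        also have "\<dots> = (\<integral>w. H' w * c (W a w) \<partial>?M)"
        proof (rule Bochner_Integration.integral_cong[OF refl])
          fix w
          show "H w * c (W a w) * clip (Vmark w y) = H' w * c (W a w)"
          proof (cases "H w = 0")
            case True then show ?thesis by (simp add: H'_def)
          next
            case False then show ?thesis using Hsupp[OF False y] by (simp add: H'_def clip_def)
          qed
        qed
        finally show ?thesis .
      qed
      have iW: "integrable ?M (\<lambda>w. G w * c (W a w))" if "G \<in> borel_measurable ?M" "\<And>w. \<bar>G w\<bar> \<le> BH" for G a
        by (rule integrable_bdd[where C="BH * Bc"]) (use that Wb in auto)
      have iWi: "integrable ?M (\<lambda>w. H w * c (W a w) * ind w)" for a
      proof (rule integrable_bdd[where C="BH * Bc"])
        show "(\<lambda>w. H w * c (W a w) * ind w) \<in> borel_measurable ?M" by measurable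
        fix w
        have "\<bar>H w * c (W a w)\<bar> * \<bar>ind w\<bar> \<le> (BH * Bc) * 1"
          using Wb[OF Hb] indb BH0 Bc0 by (intro mult_mono) auto
        then show "\<bar>H w * c (W a w) * ind w\<bar> \<le> BH * Bc" by (simp add: abs_mult)
      qed
      have iF: "integrable ?M (\<lambda>w. G w * F a w)" if "G \<in> borel_measurable ?M" "\<And>w. \<bar>G w\<bar> \<le> BH"
        "\<And>w x. G w \<noteq> 0 \<Longrightarrow> x \<in> I \<Longrightarrow> 0 \<le> Vmark w x \<and> Vmark w x \<le> 1" for G a
        by (rule integrable_bdd[where C="BH * Bc"]) (use that Fb[OF that(2,3)] in auto)
      have "(\<integral>w. H w * c (walkL Vin (xs @ [y]) w k) \<partial>?M)
          = (\<integral>w. H w * c (W i w) * ind w \<partial>?M) + ((\<integral>w. H w * c (W j w) \<partial>?M) - (\<integral>w. H w * c (W j w) * ind w \<partial>?M))"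
        unfolding pw using iWi iW[OF Hm Hb] by simp
      also have "\<dots> = (\<integral>w. H' w * c (W i w) \<partial>?M) + ((\<integral>w. H w * c (W j w) \<partial>?M) - (\<integral>w. H' w * c (W j w) \<partial>?M))"
        by (simp add: Ul)
      also have "\<dots> = (\<integral>w. H' w * F i w \<partial>?M) + ((\<integral>w. H w * F j w \<partial>?M) - (\<integral>w. H' w * F j w \<partial>?M))"
        using IH[OF H'm H'b H'inv H'supp] IH[OF Hm Hb Hinv Hsupp] by simp
      also have "\<dots> = (\<integral>w. H w * foldO Vin (xs @ [y]) w c k \<partial>?M)"
        unfolding pw2 using iF[OF H'm H'b H'supp] iF[OF Hm Hb Hsupp] by simp
      finally show ?thesis .
    qed
  qed
qed

lemma evtime_pos:
  assumes "\<forall>i. 0 < gap w (e, i)" "1 \<le> n"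
  shows "gap w (e, n) \<le> evtime w (e, n)" "0 < evtime w (e, n)"
proof -
  have "gap w (e, n) \<le> (\<Sum>m\<in>{1..n}. gap w (e, m))"
    using assms by (intro member_le_sum) (auto intro: less_imp_le)
  then show "gap w (e, n) \<le> evtime w (e, n)" using assms by (simp add: evtime_def)
  then show "0 < evtime w (e, n)" using assms(1) by (meson less_le_trans)
qed

lemma evtime_neg:
  assumes "\<forall>i. 0 < gap w (e, i)" "n \<le> 0"
  shows "evtime w (e, n) < 0"
proof -
  have "0 < (\<Sum>m\<in>{n..0}. gap w (e, m))"
    using assms by (intro sum_pos) auto
  then show ?thesis using assms by (simp add: evtime_def)
qed

lemma evtime_mono:
  assumes g: "\<forall>i. 0 < gap w (e, i)" and nn: "n < n'"
  shows "evtime w (e, n) < evtime w (e, n')"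
proof (cases "1 \<le> n")
  case True
  have "0 < (\<Sum>m\<in>{n+1..n'}. gap w (e, m))"
    using g nn by (intro sum_pos) auto
  then have "(\<Sum>m\<in>{1..n}. gap w (e, m)) < (\<Sum>m\<in>{1..n}. gap w (e, m)) + (\<Sum>m\<in>{n+1..n'}. gap w (e, m))"
    by simp
  also have "\<dots> = (\<Sum>m\<in>{1..n'}. gap w (e, m))"
  proof -
    have "{1..n'} = {1..n} \<union> {n+1..n'}" using True nn by auto
    then show ?thesis by (simp add: sum.union_disjoint)
  qed
  finally show ?thesis using True nn by (simp add: evtime_def)
next
  case False
  show ?thesis
  proof (cases "1 \<le> n'")
    case True
    then show ?thesis using evtime_neg[OF g, of n] evtime_pos(2)[OF g True] False by simp
  next
    case F2: False
    have "0 < (\<Sum>m\<in>{n..n'-1}. gap w (e, m))"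
      using g nn by (intro sum_pos) auto
    then have "(\<Sum>m\<in>{n'..0}. gap w (e, m)) < (\<Sum>m\<in>{n'..0}. gap w (e, m)) + (\<Sum>m\<in>{n..n'-1}. gap w (e, m))"
      by simp
    also have "\<dots> = (\<Sum>m\<in>{n..0}. gap w (e, m))"
    proof -
      have "{n..0} = {n'..0} \<union> {n..n'-1}" using F2 nn by auto
      then show ?thesis by (simp add: sum.union_disjoint)
    qed
    finally show ?thesis using False F2 by (simp add: evtime_def)
  qed
qed

lemma evtime_inj:
  assumes g: "\<forall>i. 0 < gap w (e, i)" and "evtime w (e, n) = evtime w (e, n')"
  shows "n = n'"
  using evtime_mono[OF g, of n n'] evtime_mono[OF g, of n' n] assms(2) by (cases n n' rule: linorder_cases) auto

lemma evtime_upd_other: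
  assumes "fst z \<noteq> e"
  shows "evtime (w(z := m)) (e, n) = evtime w (e, n)"
  using assms by (auto simp: evtime_def gap_def intro!: sum.cong)

lemma evtime_upd_self:
  "evtime (w((e, n) := m)) (e, n) = (if 1 \<le> n then fst m else - fst m) + evtime (w((e, n) := (0, 0, 0))) (e, n)"
proof (cases "1 \<le> n")
  case True
  have fin: "finite {1..n}" and mem: "n \<in> {1..n}" using True by auto
  have "(\<Sum>i\<in>{1..n}. gap (w((e, n) := m)) (e, i)) = gap (w((e, n) := m)) (e, n) + (\<Sum>i\<in>{1..n}-{n}. gap (w((e, n) := m)) (e, i))"
    by (rule sum.remove[OF fin mem])
  moreover have "(\<Sum>i\<in>{1..n}. gap (w((e, n) := (0,0,0))) (e, i)) = gap (w((e, n) := (0,0,0))) (e, n) + (\<Sum>i\<in>{1..n}-{n}. gap (w((e, n) := (0,0,0))) (e, i))"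
    by (rule sum.remove[OF fin mem])
  moreover have "(\<Sum>i\<in>{1..n}-{n}. gap (w((e, n) := m)) (e, i)) = (\<Sum>i\<in>{1..n}-{n}. gap (w((e, n) := (0,0,0))) (e, i))"
    by (intro sum.cong) (auto simp: gap_def)
  ultimately show ?thesis using True by (simp add: evtime_def gap_def)
next
  case False
  have fin: "finite {n..0}" and mem: "n \<in> {n..0}" using False by auto
  have "(\<Sum>i\<in>{n..0}. gap (w((e, n) := m)) (e, i)) = gap (w((e, n) := m)) (e, n) + (\<Sum>i\<in>{n..0}-{n}. gap (w((e, n) := m)) (e, i))"
    by (rule sum.remove[OF fin mem])
  moreover have "(\<Sum>i\<in>{n..0}. gap (w((e, n) := (0,0,0))) (e, i)) = gap (w((e, n) := (0,0,0))) (e, n) + (\<Sum>i\<in>{n..0}-{n}. gap (w((e, n) := (0,0,0))) (e, i))"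
    by (rule sum.remove[OF fin mem])
  moreover have "(\<Sum>i\<in>{n..0}-{n}. gap (w((e, n) := m)) (e, i)) = (\<Sum>i\<in>{n..0}-{n}. gap (w((e, n) := (0,0,0))) (e, i))"
    by (intro sum.cong) (auto simp: gap_def)
  ultimately show ?thesis using False by (simp add: evtime_def gap_def)
qed

lemma gap_from_evtime:
  "gap w (e, n) = (if 2 \<le> n then evtime w (e, n) - evtime w (e, n - 1) else if n = 1 then evtime w (e, 1)
     else if n = 0 then - evtime w (e, 0) else evtime w (e, n + 1) - evtime w (e, n))"
proof -
  consider "2 \<le> n" | "n = 1" | "n = 0" | "n < 0" by linarith
  then show ?thesis
  proof cases
    case 1
    have "{1..n} = insert n {1..n-1}" using 1 by auto
    then show ?thesis using 1 by (simp add: evtime_def)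
  next
    case 4
    have "{n..0} = insert n {n+1..0}" using 4 by auto
    then show ?thesis using 4 by (simp add: evtime_def)
  qed (auto simp: evtime_def)
qed

lemma AE_ExD_pos: "AE a in ExD. 0 < a"
proof -
  have "AE a in lborel. (a::real) \<noteq> 0" by (rule AE_lborel_singleton)
  then have "AE a in lborel. 0 < ennreal (exponential_density 1 a) \<longrightarrow> 0 < a"
    by eventually_elim (auto simp: exponential_density_def)
  then show ?thesis unfolding ExD_def by (subst AE_density) auto
qed

lemma AE_ExD_neq: "AE a in ExD. a \<noteq> c"
proof -
  have "AE a in lborel. (a::real) \<noteq> c" by (rule AE_lborel_singleton)
  then show ?thesis unfolding ExD_def by (subst AE_density) (auto elim: AE_mp)
qed

lemma AE_UnD: "AE v in UnD. 0 \<le> v \<and> v \<le> 1"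
  unfolding UnD_def by (subst AE_uniform_measure) auto

lemma AE_mark_fst:
  assumes "AE a in ExD. P a" "Measurable.pred borel P"
  shows "AE m in mark_dist. P (fst m)"
proof -
  interpret E: prob_space ExD by (rule prob_ExD)
  interpret UU: prob_space "UnD \<Otimes>\<^sub>M UnD" by (intro prob_space_pair prob_UnD)
  interpret P1: pair_sigma_finite ExD "UnD \<Otimes>\<^sub>M UnD" by unfold_locales
  have "AE a in ExD. AE p in UnD \<Otimes>\<^sub>M UnD. P a" using assms(1) by simp
  moreover have "Measurable.pred (ExD \<Otimes>\<^sub>M (UnD \<Otimes>\<^sub>M UnD)) (\<lambda>x. P (fst x))"
    by (rule measurable_compose[OF measurable_fst]) (use assms(2) in \<open>simp add: measurable_cong_sets[OF sets_ExD refl]\<close>)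
  ultimately show ?thesis unfolding mark_dist_eq
    by (subst (asm) P1.AE_pair_iff) (auto simp: pred_def)
qed

lemma AE_mark_V:
  assumes "AE v in UnD. P v" "Measurable.pred borel P"
  shows "AE m in mark_dist. P (fst (snd m))"
proof -
  interpret E: prob_space ExD by (rule prob_ExD)
  interpret U: prob_space UnD by (rule prob_UnD)
  interpret UU: prob_space "UnD \<Otimes>\<^sub>M UnD" by (intro prob_space_pair prob_UnD)
  interpret P1: pair_sigma_finite ExD "UnD \<Otimes>\<^sub>M UnD" by unfold_locales
  interpret P2: pair_sigma_finite UnD UnD by unfold_locales
  have pu: "Measurable.pred UnD P" using assms(2) by (simp add: measurable_cong_sets[OF sets_UnD refl])
  have "AE v in UnD. AE u in UnD. P v" using assms(1) by simp
  moreover have "Measurable.pred (UnD \<Otimes>\<^sub>M UnD) (\<lambda>x. P (fst x))"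
    by (rule measurable_compose[OF measurable_fst pu])
  ultimately have "AE p in UnD \<Otimes>\<^sub>M UnD. P (fst p)"
    by (subst (asm) P2.AE_pair_iff) (auto simp: pred_def)
  then have "AE a in ExD. AE p in UnD \<Otimes>\<^sub>M UnD. P (fst p)" by simp
  moreover have "Measurable.pred (ExD \<Otimes>\<^sub>M (UnD \<Otimes>\<^sub>M UnD)) (\<lambda>x. P (fst (snd x)))"
    by (rule measurable_compose[OF measurable_snd measurable_compose[OF measurable_fst pu]])
  ultimately show ?thesis unfolding mark_dist_eq
    by (subst (asm) P1.AE_pair_iff) (auto simp: pred_def)
qed

lemma AE_coord:
  assumes "x \<in> I" "AE m in mark_dist. P m"
  shows "AE w in base_space I. P (w x)"
  unfolding base_space_def by (rule AE_PiM_component[OF prob_mark assms])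

lemma AE_gap_pos: "x \<in> I \<Longrightarrow> AE w in base_space I. 0 < gap w x"
  unfolding gap_def by (intro AE_coord AE_mark_fst AE_ExD_pos) auto

lemma AE_V01: "x \<in> I \<Longrightarrow> AE w in base_space I. 0 \<le> Vmark w x \<and> Vmark w x \<le> 1"
  unfolding Vmark_def by (intro AE_coord AE_mark_V AE_UnD) auto

lemma ExD_le_lt1: "measure ExD {..a} < 1"
proof -
  interpret E: prob_space ExD by (rule prob_ExD)
  have D: "distributed ExD lborel (\<lambda>x. x) (exponential_density 1)"
    unfolding distributed_def
  proof (intro conjI)
    show "distr ExD lborel (\<lambda>x. x) = density lborel (exponential_density 1)"
      using distr_id2[of lborel ExD] by (simp add: ExD_def)
  qed (auto simp: ExD_def)
  have "measure ExD {..a} \<le> measure ExD {..max a 0}"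
    by (intro E.finite_measure_mono) auto
  also have "measure ExD {..max a 0} = 1 - exp (- max a 0 * 1)"
    using E.exponential_distributedD_le[OF D, of "max a 0"] by (simp add: atMost_def)
  also have "\<dots> < 1" by simp
  finally show ?thesis .
qed

lemma measure_mark_fst_le: "measure mark_dist {m. fst m \<le> a} = measure ExD {..a}"
proof -
  interpret E: prob_space ExD by (rule prob_ExD)
  interpret UU: prob_space "UnD \<Otimes>\<^sub>M UnD" by (intro prob_space_pair prob_UnD)
  interpret MK: prob_space mark_dist by (rule prob_mark)
  have eq: "{m. fst m \<le> a} = {..a} \<times> (UNIV :: (real \<times> real) set)" by auto
  have "emeasure mark_dist {m. fst m \<le> a} = emeasure ExD {..a} * emeasure (UnD \<Otimes>\<^sub>M UnD) UNIV"
    unfolding eq mark_dist_eq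
  proof (rule UU.emeasure_pair_measure_Times)
    show "(UNIV :: (real \<times> real) set) \<in> sets (UnD \<Otimes>\<^sub>M UnD)"
      using sets.top[of "UnD \<Otimes>\<^sub>M UnD"] by (simp add: space_pair_measure)
  qed auto
  also have "emeasure (UnD \<Otimes>\<^sub>M UnD) UNIV = 1"
    using UU.emeasure_space_1 by (simp add: space_pair_measure)
  finally show ?thesis by (simp add: MK.emeasure_eq_measure E.emeasure_eq_measure)
qed

lemma set_fst_le: "{m::real\<times>real\<times>real. fst m \<le> s} \<in> sets (borel \<Otimes>\<^sub>M (borel \<Otimes>\<^sub>M borel))"
proof -
  have "{m \<in> space (borel \<Otimes>\<^sub>M (borel \<Otimes>\<^sub>M borel)). fst m \<le> (s::real)} \<in> sets (borel \<Otimes>\<^sub>M (borel \<Otimes>\<^sub>M borel))"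
    by measurable
  then show ?thesis by (simp add: space_pair_measure)
qed

lemma AE_gap_big:
  assumes eI: "\<And>m. (e, m) \<in> I"
  shows "AE w in base_space I. \<exists>m::int. 1 \<le> m \<and> s < gap w (e, m)"
proof -
  let ?M = "base_space I"
  interpret MK: prob_space mark_dist by (rule prob_mark)
  interpret PS: product_prob_space "\<lambda>_. mark_dist" I by unfold_locales
  interpret PM: prob_space ?M by (rule prob_base)
  define q where "q = measure ExD {..s}"
  have q: "0 \<le> q" "q < 1" unfolding q_def using ExD_le_lt1 by auto
  define N where "N = {w \<in> space ?M. \<forall>m::nat. gap w (e, int (Suc m)) \<le> s}"
  have Nm: "N \<in> sets ?M" unfolding N_def
    by (intro sets.sets_Collect_countable_All) (use meas_gap[OF eI] in measurable)
  have bound: "measure ?M N \<le> q ^ n" for n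
  proof -
    define J where "J = (\<lambda>m. (e, int (Suc m))) ` {..<n}"
    have J: "J \<subseteq> I" "finite J" unfolding J_def using eI by auto
    have cJ: "card J = n" unfolding J_def by (subst card_image) (auto simp: inj_on_def)
    have sub: "N \<subseteq> prod_emb I (\<lambda>_. mark_dist) J (Pi\<^sub>E J (\<lambda>_. {m. fst m \<le> s}))"
      unfolding N_def J_def by (auto simp: prod_emb_def base_space_def gap_def space_PiM PiE_iff extensional_def)
    have "measure ?M N \<le> measure ?M (prod_emb I (\<lambda>_. mark_dist) J (Pi\<^sub>E J (\<lambda>_. {m. fst m \<le> s})))"
    proof (rule PM.finite_measure_mono[OF sub])
      show "prod_emb I (\<lambda>_. mark_dist) J (Pi\<^sub>E J (\<lambda>_. {m. fst m \<le> s})) \<in> sets ?M"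
        unfolding base_space_def by (rule sets_PiM_I) (use J set_fst_le in \<open>auto simp: sets_mark_dist\<close>)
    qed
    also have "\<dots> = (\<Prod>i\<in>J. measure mark_dist {m. fst m \<le> s})"
      unfolding base_space_def by (rule PS.measure_PiM_emb[OF J]) (simp add: sets_mark_dist set_fst_le)
    also have "\<dots> = q ^ n" by (simp add: cJ measure_mark_fst_le q_def)
    finally show ?thesis .
  qed
  have "measure ?M N \<le> 0"
    by (rule LIMSEQ_le_const[OF LIMSEQ_power_zero]) (use q bound in auto)
  then have "emeasure ?M N = 0" by (simp add: PM.emeasure_eq_measure measure_nonneg antisym)
  show ?thesis
  proof (rule AE_I[OF _ \<open>emeasure ?M N = 0\<close> Nm])
    show "{w \<in> space ?M. \<not> (\<exists>m::int. 1 \<le> m \<and> s < gap w (e, m))} \<subseteq> N"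
      unfolding N_def by (auto simp: not_less)
  qed
qed

lemma split_distr:
  assumes x: "x \<in> I"
  shows "distr (mark_dist \<Otimes>\<^sub>M (\<Pi>\<^sub>M i\<in>I-{x}. mark_dist)) (base_space I) (\<lambda>(m, X). X(x := m)) = base_space I"
    and "(\<lambda>(m, X). X(x := m)) \<in> measurable (mark_dist \<Otimes>\<^sub>M (\<Pi>\<^sub>M i\<in>I-{x}. mark_dist)) (base_space I)"
proof -
  let ?P = "\<Pi>\<^sub>M i\<in>I-{x}. mark_dist"
  have ins: "insert x (I - {x}) = I" using x by auto
  show "distr (mark_dist \<Otimes>\<^sub>M ?P) (base_space I) (\<lambda>(m, X). X(x := m)) = base_space I"
    using distr_pair_PiM_eq_PiM[of "I-{x}" "\<lambda>_. mark_dist" x] prob_mark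
    unfolding base_space_def ins by simp
  have "(\<lambda>p. (snd p, fst p)) \<in> measurable (mark_dist \<Otimes>\<^sub>M ?P) (?P \<Otimes>\<^sub>M mark_dist)" by measurable
  from measurable_compose[OF this measurable_add_dim[of x "I-{x}" "\<lambda>_. mark_dist"]]
  show "(\<lambda>(m, X). X(x := m)) \<in> measurable (mark_dist \<Otimes>\<^sub>M ?P) (base_space I)"
    unfolding base_space_def ins by (simp add: case_prod_beta)
qed

lemma split_AE:
  assumes x: "x \<in> I" and P: "Measurable.pred (base_space I) P"
    and H: "\<And>X. X \<in> space (\<Pi>\<^sub>M i\<in>I-{x}. mark_dist) \<Longrightarrow> AE m in mark_dist. P (X(x := m))"
  shows "AE w in base_space I. P w"
proof -
  let ?P = "\<Pi>\<^sub>M i\<in>I-{x}. mark_dist"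
  interpret Mk: prob_space mark_dist by (rule prob_mark)
  interpret PP: prob_space ?P by (intro prob_space_PiM prob_mark)
  interpret PS: pair_sigma_finite mark_dist ?P by unfold_locales
  note D = split_distr[OF x]
  have Pm: "{w \<in> space (base_space I). P w} \<in> sets (base_space I)" using P by (simp add: pred_def)
  have Q: "Measurable.pred (mark_dist \<Otimes>\<^sub>M ?P) (\<lambda>p. P ((snd p)(x := fst p)))"
    using measurable_compose[OF D(2) P] by (simp add: case_prod_beta)
  have Qs: "{p \<in> space (mark_dist \<Otimes>\<^sub>M ?P). P ((snd (p::_ \<times> _))(x := fst p))} \<in> sets (mark_dist \<Otimes>\<^sub>M ?P)"
    using Q by (simp add: pred_def)
  have "AE X in ?P. AE m in mark_dist. P (X(x := m))"
    by (rule AE_I2) (rule H)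
  then have "AE m in mark_dist. AE X in ?P. P (X(x := m))"
    by (subst PS.AE_commute) (use Qs in auto)
  then have "AE p in mark_dist \<Otimes>\<^sub>M ?P. P ((snd p)(x := fst p))"
    by (subst (asm) PS.AE_pair_iff) (use Qs in auto)
  then have "AE p in mark_dist \<Otimes>\<^sub>M ?P. P ((\<lambda>(m, X). X(x := m)) p)"
    by (simp add: case_prod_beta)
  then have "AE w in distr (mark_dist \<Otimes>\<^sub>M ?P) (base_space I) (\<lambda>(m, X). X(x := m)). P w"
    by (subst AE_distr_iff[OF D(2) Pm])
  then show ?thesis unfolding D(1) .
qed

lemma AE_evtime_neq:
  assumes x: "x \<in> edge_index E" and y: "y \<in> edge_index E" and ne: "fst x \<noteq> fst y"
  shows "AE w in base_space (edge_index E). evtime w x \<noteq> evtime w y"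
proof (rule split_AE[OF x])
  show "Measurable.pred (base_space (edge_index E)) (\<lambda>w. evtime w x \<noteq> evtime w y)"
    unfolding pred_def
    by (rule sets.sets_Collect_neg[OF measurable_equality_set[OF meas_evtime[OF x] meas_evtime[OF y]]])
  fix X
  obtain e n where xe: "x = (e, n)" by fastforce
  obtain e' n' where ye: "y = (e', n')" by fastforce
  have ee: "e \<noteq> e'" using ne xe ye by simp
  define \<sigma> where "\<sigma> = (if 1 \<le> n then 1 else -1 :: real)"
  define a where "a = evtime (X(x := (0, 0, 0))) x"
  define b where "b = evtime X y"
  have "AE m in mark_dist. fst m \<noteq> \<sigma> * (b - a)"
    by (intro AE_mark_fst AE_ExD_neq) auto
  then show "AE m in mark_dist. evtime (X(x := m)) x \<noteq> evtime (X(x := m)) y"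
  proof (rule AE_mp, intro AE_I2 impI)
    fix m :: "real \<times> real \<times> real"
    assume m: "fst m \<noteq> \<sigma> * (b - a)"
    have ex: "evtime (X(x := m)) x = \<sigma> * fst m + a"
      unfolding a_def xe \<sigma>_def by (subst evtime_upd_self) simp
    have ey: "evtime (X(x := m)) y = b"
      unfolding b_def xe ye using evtime_upd_other[of "(e, n)" e' X m n'] ee by simp
    show "evtime (X(x := m)) x \<noteq> evtime (X(x := m)) y"
      unfolding ex ey using m by (auto simp: \<sigma>_def split: if_splits)
  qed
qed

lemma countable_edge_index: "finite E \<Longrightarrow> countable (edge_index E)"
  unfolding edge_index_def by (rule countable_SIGMA) (auto intro: countable_finite)

lemma coord_out: "w \<in> space (base_space I) \<Longrightarrow> x \<notin> I \<Longrightarrow> w x = undefined"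
  by (cases x) (auto simp: base_space_def space_PiM PiE_iff extensional_def)

lemma evtime_out:
  assumes "w \<in> space (base_space (edge_index E))" "fst x \<notin> E"
  shows "evtime w x = evtime (\<lambda>_. undefined) x"
proof -
  obtain e n where x: "x = (e, n)" by fastforce
  have "gap w (e, i) = gap (\<lambda>_. undefined) (e, i)" for i
    using coord_out[OF assms(1), of "(e, i)"] assms(2) x by (simp add: gap_def edge_index_def)
  then show ?thesis unfolding x evtime_def by simp
qed

lemma meas_all_M:
  shows "(\<lambda>w. evtime w x) \<in> borel_measurable (base_space (edge_index E))"
    and "(\<lambda>w. Vmark w x) \<in> borel_measurable (base_space (edge_index E))"
    and "(\<lambda>w. gap w x) \<in> borel_measurable (base_space (edge_index E))"
proof -
  show "(\<lambda>w. evtime w x) \<in> borel_measurable (base_space (edge_index E))"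
  proof (cases "fst x \<in> E")
    case True then have "x \<in> edge_index E" by (cases x) (auto simp: edge_index_def)
    then show ?thesis by (rule meas_evtime)
  next
    case False then show ?thesis
      by (subst measurable_cong[where g="\<lambda>_. evtime (\<lambda>_. undefined) x"]) (auto simp: evtime_out)
  qed
  show "(\<lambda>w. Vmark w x) \<in> borel_measurable (base_space (edge_index E))"
  proof (cases "x \<in> edge_index E")
    case True then show ?thesis by (rule meas_V)
  next
    case False then show ?thesis
      by (subst measurable_cong[where g="\<lambda>_. Vmark (\<lambda>_. undefined) x"]) (auto simp: Vmark_def coord_out)
  qed
  show "(\<lambda>w. gap w x) \<in> borel_measurable (base_space (edge_index E))"
  proof (cases "x \<in> edge_index E")
    case True then show ?thesis by (rule meas_gap)
  next
    case False then show ?thesis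
      by (subst measurable_cong[where g="\<lambda>_. gap (\<lambda>_. undefined) x"]) (auto simp: gap_def coord_out)
  qed
qed

definition NVmap :: "('v \<times> 'v) set \<Rightarrow> (('v \<times> 'v) \<times> int \<Rightarrow> real \<times> real \<times> real) \<Rightarrow> _" where
  "NVmap E w = (\<lambda>x\<in>edge_index E. evtime w x, \<lambda>x\<in>edge_index E. Vmark w x)"

abbreviation "NVtarget E \<equiv> (\<Pi>\<^sub>M x\<in>edge_index E. (borel :: real measure)) \<Otimes>\<^sub>M (\<Pi>\<^sub>M x\<in>edge_index E. (borel :: real measure))"

lemma NV_algebra_eq: "NV_algebra E = vimage_algebra (space (base_space (edge_index E))) (NVmap E) (NVtarget E)"
  unfolding NV_algebra_def NVmap_def ..

lemma NVmap_meas: "NVmap E \<in> measurable (base_space (edge_index E)) (NVtarget E)"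
  unfolding NVmap_def by (intro measurable_Pair measurable_restrict meas_evtime meas_V)

lemma NVmap_space: "NVmap E \<in> space (base_space (edge_index E)) \<rightarrow> space (NVtarget E)"
  using measurable_space[OF NVmap_meas] by auto

lemma space_NV[simp]: "space (NV_algebra E) = space (base_space (edge_index E))"
  unfolding NV_algebra_eq by simp

lemma sets_NV_sub: "sets (NV_algebra E) \<subseteq> sets (base_space (edge_index E))"
  using NVmap_meas[of E] unfolding NV_algebra_eq measurable_iff_sets by auto

lemma subalg_NV: "subalgebra (base_space (edge_index E)) (NV_algebra E)"
  unfolding subalgebra_def using sets_NV_sub by auto

lemma NVmap_meas_F: "NVmap E \<in> measurable (NV_algebra E) (NVtarget E)"
  unfolding NV_algebra_eq by (rule measurable_vimage_algebra1[OF NVmap_space])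

lemma meas_all_F:
  shows "(\<lambda>w. evtime w x) \<in> borel_measurable (NV_algebra E)"
    and "(\<lambda>w. Vmark w x) \<in> borel_measurable (NV_algebra E)"
    and "(\<lambda>w. gap w x) \<in> borel_measurable (NV_algebra E)"
proof -
  show ev: "(\<lambda>w. evtime w y) \<in> borel_measurable (NV_algebra E)" for y
  proof (cases "y \<in> edge_index E")
    case True
    have "(\<lambda>w. fst (NVmap E w) y) \<in> borel_measurable (NV_algebra E)"
      using measurable_compose[OF NVmap_meas_F measurable_compose[OF measurable_fst measurable_component_singleton[OF True]]] .
    then show ?thesis
      by (rule measurable_cong[THEN iffD1, rotated]) (use True in \<open>simp add: NVmap_def\<close>)
  next
    case False then have "fst y \<notin> E" by (cases y) (auto simp: edge_index_def)
    then show ?thesis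
      by (subst measurable_cong[where g="\<lambda>_. evtime (\<lambda>_. undefined) y"]) (auto simp: evtime_out)
  qed
  show "(\<lambda>w. Vmark w x) \<in> borel_measurable (NV_algebra E)"
  proof (cases "x \<in> edge_index E")
    case True
    have "(\<lambda>w. snd (NVmap E w) x) \<in> borel_measurable (NV_algebra E)"
      using measurable_compose[OF NVmap_meas_F measurable_compose[OF measurable_snd measurable_component_singleton[OF True]]] .
    then show ?thesis
      by (rule measurable_cong[THEN iffD1, rotated]) (use True in \<open>simp add: NVmap_def\<close>)
  next
    case False then show ?thesis
      by (subst measurable_cong[where g="\<lambda>_. Vmark (\<lambda>_. undefined) x"]) (auto simp: Vmark_def coord_out)
  qed
  obtain e n where x: "x = (e, n)" by fastforce
  show "(\<lambda>w. gap w x) \<in> borel_measurable (NV_algebra E)"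
    unfolding x gap_from_evtime[of _ e n] using ev by measurable
qed

lemma NV_inv:
  assumes A: "A \<in> sets (NV_algebra E)" and w: "w \<in> space (base_space (edge_index E))" and x: "x \<in> edge_index E"
  shows "w(x := (gap w x, Vmark w x, u)) \<in> A \<longleftrightarrow> w \<in> A"
proof -
  let ?w' = "w(x := (gap w x, Vmark w x, u))"
  have w': "?w' \<in> space (base_space (edge_index E))"
    using w x by (auto simp: base_space_def space_PiM PiE_iff extensional_def)
  have ev: "evtime ?w' y = evtime w y" for y
    unfolding evtime_def by (simp only: gap_updU)
  have eq: "NVmap E ?w' = NVmap E w"
    unfolding NVmap_def ev Vmark_updU ..
  obtain S where S: "S \<in> sets (NVtarget E)" "A = NVmap E -` S \<inter> space (base_space (edge_index E))"
    using A unfolding NV_algebra_eq sets_vimage_algebra2[OF NVmap_space] by blast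
  show ?thesis unfolding S(2) using w w' eq by auto
qed

definition Gcond :: "('v \<times> 'v) set \<Rightarrow> real \<Rightarrow> (('v \<times> 'v) \<times> int \<Rightarrow> real \<times> real \<times> real) \<Rightarrow> bool" where
  "Gcond E s w \<longleftrightarrow> (\<forall>x\<in>edge_index E. 0 < gap w x \<and> 0 \<le> Vmark w x \<and> Vmark w x \<le> 1)
     \<and> (\<forall>e\<in>E. \<exists>n::int. s < evtime w (e, n))
     \<and> (\<forall>x\<in>edge_index E. \<forall>y\<in>edge_index E. x \<noteq> y \<longrightarrow> evtime w x \<noteq> evtime w y)"

definition Gset :: "('v \<times> 'v) set \<Rightarrow> real \<Rightarrow> (('v \<times> 'v) \<times> int \<Rightarrow> real \<times> real \<times> real) set" where
  "Gset E s = {w \<in> space (base_space (edge_index E)). Gcond E s w}"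

lemma Gcond_pred:
  assumes fin: "finite E"
    and m1[measurable]: "\<And>x. (\<lambda>w. evtime w x) \<in> borel_measurable N"
    and m2[measurable]: "\<And>x. (\<lambda>w. Vmark w x) \<in> borel_measurable N"
    and m3[measurable]: "\<And>x. (\<lambda>w. gap w x) \<in> borel_measurable N"
  shows "Measurable.pred N (Gcond E s)"
proof -
  have c: "countable (edge_index E)" "countable E" using fin countable_edge_index countable_finite by auto
  have s1: "{w \<in> space N. \<forall>x\<in>edge_index E. 0 < gap w x \<and> 0 \<le> Vmark w x \<and> Vmark w x \<le> 1} \<in> sets N"
    by (rule sets.sets_Collect_countable_All'[OF _ c(1)]) measurable
  have s2: "{w \<in> space N. \<forall>e\<in>E. \<exists>n::int. s < evtime w (e, n)} \<in> sets N"
  proof (rule sets.sets_Collect_countable_All'[OF _ c(2)], rule sets.sets_Collect_countable_Ex)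
    fix e n
    show "{w \<in> space N. s < evtime w (e, n)} \<in> sets N"
      using measurable_sets[OF m1[of "(e, n)"], of "{s<..}"] by (simp add: vimage_def Int_def conj_commute)
  qed
  have s3: "{w \<in> space N. \<forall>x\<in>edge_index E. \<forall>y\<in>edge_index E. x \<noteq> y \<longrightarrow> evtime w x \<noteq> evtime w y} \<in> sets N"
  proof (rule sets.sets_Collect_countable_All'[OF _ c(1)], rule sets.sets_Collect_countable_All'[OF _ c(1)])
    fix x y
    show "{w \<in> space N. x \<noteq> y \<longrightarrow> evtime w x \<noteq> evtime w y} \<in> sets N"
    proof (cases "x = y")
      case True then show ?thesis by simp
    next
      case False then show ?thesis
        using sets.sets_Collect_neg[OF measurable_equality_set[OF m1[of x] m1[of y]]] by simp
    qed
  qed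
  define P1 where "P1 w \<longleftrightarrow> (\<forall>x\<in>edge_index E. 0 < gap w x \<and> 0 \<le> Vmark w x \<and> Vmark w x \<le> 1)" for w
  define P2 where "P2 w \<longleftrightarrow> (\<forall>e\<in>E. \<exists>n::int. s < evtime w (e, n))" for w
  define P3 where "P3 w \<longleftrightarrow> (\<forall>x\<in>edge_index E. \<forall>y\<in>edge_index E. x \<noteq> y \<longrightarrow> evtime w x \<noteq> evtime w y)" for w
  have eq: "Gcond E s w \<longleftrightarrow> P1 w \<and> P2 w \<and> P3 w" for w
    unfolding Gcond_def P1_def P2_def P3_def ..
  have "{w \<in> space N. Gcond E s w} = {w \<in> space N. P1 w} \<inter> ({w \<in> space N. P2 w} \<inter> {w \<in> space N. P3 w})"
    unfolding eq by blast
  moreover have "{w \<in> space N. P1 w} \<inter> ({w \<in> space N. P2 w} \<inter> {w \<in> space N. P3 w}) \<in> sets N"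
    using sets.Int[OF s1 sets.Int[OF s2 s3]] unfolding P1_def P2_def P3_def .
  ultimately show ?thesis unfolding pred_def by simp
qed

lemma Gset_sets_M: "finite E \<Longrightarrow> Gset E s \<in> sets (base_space (edge_index E))"
  using Gcond_pred[OF _ meas_all_M(1) meas_all_M(2) meas_all_M(3), of E s] unfolding Gset_def pred_def by auto

lemma Gset_sets_F: "finite E \<Longrightarrow> Gset E s \<in> sets (NV_algebra E)"
  using Gcond_pred[OF _ meas_all_F(1) meas_all_F(2) meas_all_F(3), of E s] unfolding Gset_def pred_def by auto

lemma AE_Gset:
  assumes fin: "finite E"
  shows "AE w in base_space (edge_index E). w \<in> Gset E s"
proof -
  let ?I = "edge_index E"
  let ?M = "base_space ?I"
  have c: "countable ?I" "countable E" using fin countable_edge_index countable_finite by auto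
  have a1: "AE w in ?M. \<forall>x\<in>?I. 0 < gap w x \<and> 0 \<le> Vmark w x \<and> Vmark w x \<le> 1"
  proof (rule AE_ball_countable'[OF _ c(1)])
    fix x assume x: "x \<in> ?I"
    show "AE w in ?M. 0 < gap w x \<and> 0 \<le> Vmark w x \<and> Vmark w x \<le> 1"
      using AE_gap_pos[OF x] AE_V01[OF x] by eventually_elim auto
  qed
  have a2: "AE w in ?M. \<forall>e\<in>E. \<exists>m::int. 1 \<le> m \<and> s < gap w (e, m)"
    by (rule AE_ball_countable'[OF _ c(2)], rule AE_gap_big) (auto simp: edge_index_def)
  have a3: "AE w in ?M. \<forall>x\<in>?I. \<forall>y\<in>?I. fst x \<noteq> fst y \<longrightarrow> evtime w x \<noteq> evtime w y"
    by (rule AE_ball_countable'[OF _ c(1)], rule AE_ball_countable'[OF _ c(1)]) (auto intro: AE_evtime_neq)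
  show ?thesis
    using a1 a2 a3 AE_space
  proof eventually_elim
    case (elim w)
    have gp: "\<forall>i. 0 < gap w (e, i)" if "e \<in> E" for e
      using elim(1) that by (auto simp: edge_index_def)
    have "\<exists>n::int. s < evtime w (e, n)" if e: "e \<in> E" for e
    proof -
      obtain m :: int where m: "1 \<le> m" "s < gap w (e, m)" using elim(2) e by auto
      then have "s < evtime w (e, m)" using evtime_pos(1)[OF gp[OF e] m(1)] by linarith
      then show ?thesis by blast
    qed
    moreover have "evtime w x \<noteq> evtime w y" if "x \<in> ?I" "y \<in> ?I" "x \<noteq> y" for x y
    proof (cases "fst x = fst y")
      case False then show ?thesis using elim(3) that by auto
    next
      case True
      obtain e n where x: "x = (e, n)" by fastforce
      obtain n' where y: "y = (e, n')" using True x by (cases y) auto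
      have e: "e \<in> E" using that(1) x by (simp add: edge_index_def)
      show ?thesis using evtime_inj[OF gp[OF e], of n n'] that(3) x y by auto
    qed
    ultimately show ?case using elim(1,4) unfolding Gset_def Gcond_def by auto
  qed
qed

lemma sorted_events_prop:
  assumes "finite A"
  shows "distinct (sorted_events tm A) \<and> set (sorted_events tm A) = A \<and> sorted_wrt (\<lambda>x y. tm x \<le> tm y) (sorted_events tm A)"
proof -
  obtain xs where xs: "set xs = A" "distinct xs" using finite_distinct_list[OF assms] by blast
  let ?ys = "sort_key tm xs"
  have "distinct ?ys \<and> set ?ys = A \<and> sorted_wrt (\<lambda>x y. tm x \<le> tm y) ?ys"
    using xs sorted_sort_key[of tm xs] by (simp add: sorted_map)
  then have ex: "\<exists>ys. distinct ys \<and> set ys = A \<and> sorted_wrt (\<lambda>x y. tm x \<le> tm y) ys" by blast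
  from someI_ex[OF ex] show ?thesis unfolding sorted_events_def using assms by simp
qed

definition ChL :: "'i set \<times> ('i \<times> 'i) set \<Rightarrow> 'i list" where
  "ChL p = (if finite (fst p) then (SOME xs. distinct xs \<and> set xs = fst p \<and> sorted_wrt (\<lambda>x y. (x, y) \<in> snd p) xs) else [])"

lemma sorted_events_ChL:
  "sorted_events tm A = ChL (A, {p \<in> A \<times> A. tm (fst p) \<le> tm (snd p)})"
proof (cases "finite A")
  case True
  define R where "R = {p \<in> A \<times> A. tm (fst p) \<le> tm (snd p)}"
  have P: "sorted_wrt (\<lambda>x y. tm x \<le> tm y) xs = sorted_wrt (\<lambda>x y. (x, y) \<in> R) xs" if "set xs = A" for xs
  proof
    assume "sorted_wrt (\<lambda>x y. tm x \<le> tm y) xs"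
    then show "sorted_wrt (\<lambda>x y. (x, y) \<in> R) xs"
      by (rule sorted_wrt_mono_rel[rotated]) (use that in \<open>simp add: R_def\<close>)
  next
    assume "sorted_wrt (\<lambda>x y. (x, y) \<in> R) xs"
    then show "sorted_wrt (\<lambda>x y. tm x \<le> tm y) xs"
      by (rule sorted_wrt_mono_rel[rotated]) (simp add: R_def)
  qed
  have eq: "(\<lambda>xs. distinct xs \<and> set xs = A \<and> sorted_wrt (\<lambda>x y. tm x \<le> tm y) xs) =
            (\<lambda>xs. distinct xs \<and> set xs = A \<and> sorted_wrt (\<lambda>x y. (x, y) \<in> R) xs)"
  proof
    fix xs
    show "(distinct xs \<and> set xs = A \<and> sorted_wrt (\<lambda>x y. tm x \<le> tm y) xs) =
          (distinct xs \<and> set xs = A \<and> sorted_wrt (\<lambda>x y. (x, y) \<in> R) xs)"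
      by (cases "set xs = A") (simp_all only: P simp_thms)
  qed
  have "sorted_events tm A = (SOME xs. distinct xs \<and> set xs = A \<and> sorted_wrt (\<lambda>x y. tm x \<le> tm y) xs)"
    unfolding sorted_events_def using True by simp
  also have "\<dots> = (SOME xs. distinct xs \<and> set xs = A \<and> sorted_wrt (\<lambda>x y. (x, y) \<in> R) xs)"
    by (rule arg_cong[where f=Eps, OF eq])
  also have "\<dots> = ChL (A, R)"
    unfolding ChL_def using True by simp
  finally show ?thesis unfolding R_def .
next
  case False
  then show ?thesis unfolding sorted_events_def ChL_def by simp
qed

lemma sorted_events_meas:
  fixes tm :: "'w \<Rightarrow> 'i \<Rightarrow> real" and evs :: "'w \<Rightarrow> 'i set"
  assumes I: "countable I" and evsI: "\<And>w. w \<in> space N \<Longrightarrow> evs w \<subseteq> I"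
    and evsm[measurable]: "\<And>x. Measurable.pred N (\<lambda>w. x \<in> evs w)"
    and tmm[measurable]: "\<And>x. (\<lambda>w. tm w x) \<in> borel_measurable N"
    and Qm: "\<And>L. (\<lambda>w. Q L w) \<in> measurable N K"
  shows "(\<lambda>w. Q (sorted_events (tm w) (evs w)) w) \<in> measurable N K"
proof -
  define keyR where "keyR w = {p \<in> evs w \<times> evs w. tm w (fst p) \<le> tm w (snd p)}" for w
  have key: "sorted_events (tm w) (evs w) = ChL (evs w, keyR w)" for w
    unfolding keyR_def by (rule sorted_events_ChL)
  define FS where "FS = {A. finite A \<and> A \<subseteq> I}"
  define FR where "FR = {R. finite R \<and> R \<subseteq> I \<times> I}"
  have cFS: "countable FS" unfolding FS_def by (rule countable_Collect_finite_subset[OF I])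
  have cFR: "countable FR" unfolding FR_def by (rule countable_Collect_finite_subset) (use I in auto)
  define P where "P AR = {w \<in> space N. evs w = fst AR \<and> keyR w = snd AR}" for AR
  define Pinf where "Pinf = {w \<in> space N. infinite (evs w)}"
  have PA: "{w \<in> space N. evs w = A} \<in> sets N" if "A \<subseteq> I" for A
  proof -
    have "{w \<in> space N. evs w = A} = {w \<in> space N. \<forall>x\<in>I. x \<in> evs w \<longleftrightarrow> x \<in> A}"
      using evsI that by blast
    also have "\<dots> \<in> sets N"
      by (rule sets.sets_Collect_countable_All'[OF _ I]) measurable
    finally show ?thesis .
  qed
  have PR: "{w \<in> space N. keyR w = R} \<in> sets N" if R: "R \<subseteq> I \<times> I" for R
  proof -
    have mem: "p \<in> keyR w \<longleftrightarrow> (fst p \<in> evs w \<and> snd p \<in> evs w \<and> tm w (fst p) \<le> tm w (snd p))" for p w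
      by (cases p) (simp add: keyR_def)
    have kI: "keyR w \<subseteq> I \<times> I" if "w \<in> space N" for w
      using evsI[OF that] unfolding keyR_def by auto
    have iff: "keyR w = R \<longleftrightarrow> (\<forall>p\<in>I \<times> I. p \<in> keyR w \<longleftrightarrow> p \<in> R)" if "w \<in> space N" for w
      using kI[OF that] R by blast
    have "{w \<in> space N. keyR w = R} = {w \<in> space N. \<forall>p\<in>I \<times> I. (fst p \<in> evs w \<and> snd p \<in> evs w \<and> tm w (fst p) \<le> tm w (snd p)) \<longleftrightarrow> p \<in> R}"
      using iff by (auto simp only: mem)
    also have "\<dots> \<in> sets N"
    proof (rule sets.sets_Collect_countable_All'[OF _ countable_SIGMA[OF I I]])
      fix p
      show "{w \<in> space N. (fst p \<in> evs w \<and> snd p \<in> evs w \<and> tm w (fst p) \<le> tm w (snd p)) \<longleftrightarrow> p \<in> R} \<in> sets N"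
      proof (cases "p \<in> R")
        case True then show ?thesis by simp measurable
      next
        case False then show ?thesis by simp measurable
      qed
    qed
    finally show ?thesis .
  qed
  have Pm: "P AR \<in> sets N" if "AR \<in> FS \<times> FR" for AR
  proof -
    have "P AR = {w \<in> space N. evs w = fst AR} \<inter> {w \<in> space N. keyR w = snd AR}"
      unfolding P_def by auto
    then show ?thesis using PA PR that unfolding FS_def FR_def by auto
  qed
  have Pinfm: "Pinf \<in> sets N"
  proof -
    have "{w \<in> space N. finite (evs w)} = {w \<in> space N. \<exists>A\<in>FS. evs w = A}"
      using evsI unfolding FS_def by auto
    also have "\<dots> \<in> sets N"
      by (rule sets.sets_Collect_countable_Ex'[OF _ cFS]) (use PA in \<open>auto simp: FS_def\<close>)
    finally have "{w \<in> space N. finite (evs w)} \<in> sets N" .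
    then have "space N - {w \<in> space N. finite (evs w)} \<in> sets N" by auto
    moreover have "space N - {w \<in> space N. finite (evs w)} = Pinf" unfolding Pinf_def by auto
    ultimately show ?thesis by simp
  qed
  show ?thesis
  proof (rule measurable_piecewise_restrict[of "insert Pinf (P ` (FS \<times> FR))"])
    show "countable (insert Pinf (P ` (FS \<times> FR)))" using cFS cFR by auto
    show "\<Omega> \<inter> space N \<in> sets N" if "\<Omega> \<in> insert Pinf (P ` (FS \<times> FR))" for \<Omega>
      using that Pm Pinfm by (auto simp: P_def Pinf_def Int_absorb2 intro: sets.Int)
    show "space N \<subseteq> \<Union> (insert Pinf (P ` (FS \<times> FR)))"
    proof
      fix w assume w: "w \<in> space N"
      show "w \<in> \<Union> (insert Pinf (P ` (FS \<times> FR)))"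
      proof (cases "finite (evs w)")
        case True
        have "(evs w, keyR w) \<in> FS \<times> FR"
          using True evsI[OF w] unfolding FS_def FR_def keyR_def
          by (auto intro: finite_subset[of _ "evs w \<times> evs w"])
        moreover have "w \<in> P (evs w, keyR w)" using w by (simp add: P_def)
        ultimately show ?thesis by blast
      next
        case False then show ?thesis using w by (auto simp: Pinf_def)
      qed
    qed
    show "(\<lambda>w. Q (sorted_events (tm w) (evs w)) w) \<in> measurable (restrict_space N \<Omega>) K"
      if "\<Omega> \<in> insert Pinf (P ` (FS \<times> FR))" for \<Omega>
    proof -
      from that consider "\<Omega> = Pinf" | AR where "AR \<in> FS \<times> FR" "\<Omega> = P AR" by blast
      then show ?thesis
      proof cases
        case 1
        have "(\<lambda>w. Q [] w) \<in> measurable (restrict_space N \<Omega>) K"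
          by (rule measurable_restrict_space1[OF Qm])
        then show ?thesis
          by (rule measurable_cong[THEN iffD1, rotated])
             (auto simp: space_restrict_space 1 Pinf_def sorted_events_def)
      next
        case (2 AR)
        have "(\<lambda>w. Q (ChL AR) w) \<in> measurable (restrict_space N \<Omega>) K"
          by (rule measurable_restrict_space1[OF Qm])
        then show ?thesis
          by (rule measurable_cong[THEN iffD1, rotated])
             (auto simp: space_restrict_space 2 P_def, metis key prod.collapse)
      qed
    qed
  qed
qed

lemma meas_U_all_M: "(\<lambda>w. Umark w x) \<in> borel_measurable (base_space (edge_index E))"
proof (cases "x \<in> edge_index E")
  case True then show ?thesis by (rule meas_U)
next
  case False then show ?thesis
    by (subst measurable_cong[where g="\<lambda>_. Umark (\<lambda>_. undefined) x"]) (auto simp: Umark_def coord_out)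
qed

lemma less_set_meas:
  assumes [measurable]: "f \<in> borel_measurable N" "g \<in> borel_measurable N"
  shows "{w \<in> space N. f w < (g w :: real)} \<in> sets N"
  by measurable

lemma walkL_meas_gen:
  assumes mV: "\<And>x. (\<lambda>w. Vmark w x) \<in> borel_measurable N" and mU: "\<And>x. (\<lambda>w. Umark w x) \<in> borel_measurable N"
  shows "(\<lambda>w. walkL Vin L w k) \<in> measurable N (count_space UNIV)"
proof (induction L)
  case Nil then show ?case by simp
next
  case (Cons x xs)
  note f = Cons.IH
  obtain i j where ij: "fst x = (i, j)" by fastforce
  have s1: "{w \<in> space N. walkL Vin xs w k = i \<or> walkL Vin xs w k = j} \<in> sets N"
    using measurable_sets[OF f, of "{i, j}"] by (simp add: vimage_def Int_def conj_commute)
  have s2: "{w \<in> space N. walkL Vin xs w k \<in> Vin} \<in> sets N"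
    using measurable_sets[OF f, of "Vin"] by (simp add: vimage_def Int_def conj_commute)
  have s3: "{w \<in> space N. Umark w x < Vmark w x} \<in> sets N"
    by (rule less_set_meas[OF mU mV])
  show ?case
    unfolding walkL_Cons ij walk_step_def
    by (simp, intro measurable_If f s1 s2 s3 measurable_const) auto
qed

lemma foldO_meas_gen:
  assumes mV[measurable]: "\<And>x. (\<lambda>w. Vmark w x) \<in> borel_measurable N"
  shows "(\<lambda>w. foldO Vin L w c l) \<in> borel_measurable N"
proof (induction L arbitrary: l rule: rev_induct)
  case Nil then show ?case by simp
next
  case (snoc y xs)
  note [measurable] = snoc.IH
  obtain i j where ij: "fst y = (i, j)" by fastforce
  show ?case
    unfolding foldO_snoc ij opinion_update_def by simp measurable
qed

lemma walkL_in:
  assumes "\<forall>x\<in>set L. fst (fst x) \<in> S \<and> snd (fst x) \<in> S" "k \<in> S"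
  shows "walkL Vin L w k \<in> S"
  using assms by (induction L) (auto simp: walkL_Cons walk_step_def split: prod.splits)

lemma foldO_agree:
  assumes "\<forall>x\<in>set L. fst (fst x) \<in> S \<and> snd (fst x) \<in> S" "\<forall>v\<in>S. c1 v = c2 v" "v \<in> S"
  shows "foldO Vin L w c1 v = foldO Vin L w c2 v"
  using assms(1,3)
proof (induction L arbitrary: v rule: rev_induct)
  case Nil then show ?case using assms(2) by simp
next
  case (snoc y xs)
  obtain i j where ij: "fst y = (i, j)" by fastforce
  have "i \<in> S" "j \<in> S" using snoc.prems ij by auto
  then show ?case using snoc unfolding foldO_snoc ij opinion_update_def by auto
qed

lemma events_R_sub: "events_R E s w \<subseteq> edge_index E"
  unfolding events_R_def by auto

lemma events_O_sub: "events_O E s w \<subseteq> edge_index E"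
  unfolding events_O_def by auto

lemma G_gap: "w \<in> Gset E s \<Longrightarrow> e \<in> E \<Longrightarrow> \<forall>i. 0 < gap w (e, i)"
  unfolding Gset_def Gcond_def by (auto simp: edge_index_def)

lemma G_events_eq:
  assumes w: "w \<in> Gset E s"
  shows "events_O E s w = events_R E s w"
proof -
  have "evtime w x \<noteq> 0" if "x \<in> edge_index E" for x
  proof -
    obtain e n where x: "x = (e, n)" by fastforce
    have e: "e \<in> E" using that x by (simp add: edge_index_def)
    show ?thesis using evtime_pos(2)[OF G_gap[OF w e], of n] evtime_neg[OF G_gap[OF w e], of n] x
      by (cases "1 \<le> n") auto
  qed
  then show ?thesis unfolding events_O_def events_R_def by force
qed

lemma G_events_finite:
  assumes w: "w \<in> Gset E s" and fin: "finite E"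
  shows "finite (events_R E s w)"
proof -
  have "\<forall>e\<in>E. \<exists>n::int. s < evtime w (e, n)" using w unfolding Gset_def Gcond_def by auto
  then obtain N where N: "\<And>e. e \<in> E \<Longrightarrow> s < evtime w (e, N e)" by metis
  have "events_R E s w \<subseteq> (\<Union>e\<in>E. {e} \<times> {1..N e})"
  proof
    fix x assume x: "x \<in> events_R E s w"
    obtain e n where xe: "x = (e, n)" by fastforce
    have e: "e \<in> E" and t: "0 \<le> evtime w (e, n)" "evtime w (e, n) \<le> s"
      using x xe unfolding events_R_def edge_index_def by auto
    have "1 \<le> n" using evtime_neg[OF G_gap[OF w e], of n] t by (cases "1 \<le> n") auto
    moreover have "n \<le> N e"
    proof (rule ccontr)
      assume "\<not> n \<le> N e"
      then have "evtime w (e, N e) < evtime w (e, n)" by (intro evtime_mono[OF G_gap[OF w e]]) auto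
      then show False using N[OF e] t by auto
    qed
    ultimately show "x \<in> (\<Union>e\<in>E. {e} \<times> {1..N e})" using e xe by auto
  qed
  moreover have "finite (\<Union>e\<in>E. {e} \<times> {1..N e})" using fin by auto
  ultimately show ?thesis by (rule finite_subset)
qed

locale ST =
  fixes Vin Vb :: "'v set" and E :: "('v \<times> 'v) set"
    and O0 :: "'v \<Rightarrow> real" and s :: real and k :: 'v
  assumes fin: "finite E" and finV: "finite Vin" and finB: "finite Vb"
    and edges: "\<forall>(i, j)\<in>E. i \<in> Vin \<and> j \<in> Vin \<union> Vb"
    and kS: "k \<in> Vin \<union> Vb"
begin

abbreviation "II \<equiv> edge_index E"
abbreviation "MM \<equiv> base_space (edge_index E)"
abbreviation "FF \<equiv> NV_algebra E"
abbreviation "GG \<equiv> Gset E s"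
definition "Bc = (\<Sum>v\<in>Vin \<union> Vb. \<bar>O0 v\<bar>)"
definition "cc v = (if v \<in> Vin \<union> Vb then O0 v else 0)"
definition "Lw w = sorted_events (evtime w) (events_R E s w)"

lemma edgesI: "x \<in> II \<Longrightarrow> fst (fst x) \<in> Vin \<and> fst (fst x) \<in> Vin \<union> Vb \<and> snd (fst x) \<in> Vin \<union> Vb"
  using edges by (auto simp: edge_index_def)

lemma cc_bound: "\<bar>cc v\<bar> \<le> Bc"
  unfolding cc_def Bc_def
  using finV finB by (auto intro: member_le_sum[of v "Vin \<union> Vb" "\<lambda>v. \<bar>O0 v\<bar>"] simp: sum_nonneg)

lemma Bc_nonneg: "0 \<le> Bc" using cc_bound[of undefined] by linarith

lemma walk_S: "set L \<subseteq> II \<Longrightarrow> walkL Vin L w k \<in> Vin \<union> Vb"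
  by (rule walkL_in) (use edgesI kS in auto)

lemma bw_eq: "backward_walk Vin E s k w = walkL Vin (Lw w) w k"
  unfolding backward_walk_def walkL_def Lw_def ..

lemma Lw_set: "set (Lw w) \<subseteq> II" if "w \<in> GG"
proof -
  have "set (Lw w) = events_R E s w" using sorted_events_prop[OF G_events_finite[OF that fin]] unfolding Lw_def by auto
  then show ?thesis using events_R_sub[of E s w] by simp
qed

lemma Lw_distinct: "distinct (Lw w)" if "w \<in> GG"
  using sorted_events_prop[OF G_events_finite[OF that fin]] unfolding Lw_def by auto

lemma opinion_eq: "w \<in> GG \<Longrightarrow> opinion Vin E O0 s w = foldO Vin (Lw w) w O0"
  unfolding opinion_def foldO_def Lw_def by (simp add: G_events_eq)

lemma f_eq: "O0 (backward_walk Vin E s k w) = cc (walkL Vin (Lw w) w k)" if "w \<in> GG"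
proof -
  have "walkL Vin (Lw w) w k \<in> Vin \<union> Vb" by (rule walk_S[OF Lw_set[OF that]])
  then show ?thesis unfolding bw_eq cc_def by simp
qed

lemma op_eq: "opinion Vin E O0 s w k = foldO Vin (Lw w) w cc k" if "w \<in> GG"
  unfolding opinion_eq[OF that]
  by (rule foldO_agree[where S="Vin \<union> Vb", symmetric]) (use Lw_set[OF that] edgesI kS in \<open>auto simp: cc_def\<close>)

lemma evsR_pred: "Measurable.pred N (\<lambda>w. x \<in> events_R E s w)" if "\<And>x. (\<lambda>w. evtime w x) \<in> borel_measurable N"
  using that[of x] unfolding events_R_def by (cases "x \<in> II") simp_all

lemma evsO_pred: "Measurable.pred N (\<lambda>w. x \<in> events_O E s w)" if "\<And>x. (\<lambda>w. evtime w x) \<in> borel_measurable N"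
  using that[of x] unfolding events_O_def by (cases "x \<in> II") simp_all

lemma f_meas: "(\<lambda>w. O0 (backward_walk Vin E s k w)) \<in> borel_measurable MM"
proof -
  have "(\<lambda>w. O0 (walkL Vin (sorted_events (evtime w) (events_R E s w)) w k)) \<in> borel_measurable MM"
  proof (rule sorted_events_meas[OF countable_edge_index[OF fin]])
    show "Measurable.pred MM (\<lambda>w. x \<in> events_R E s w)" for x by (rule evsR_pred[OF meas_all_M(1)])
    show "(\<lambda>w. evtime w x) \<in> borel_measurable MM" for x by (rule meas_all_M(1))
    show "(\<lambda>w. O0 (walkL Vin L w k)) \<in> borel_measurable MM" for L
      by (rule measurable_compose[OF walkL_meas_gen[OF meas_all_M(2) meas_U_all_M]]) simp
  qed (use events_R_sub in blast)
  then show ?thesis unfolding backward_walk_def walkL_def .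
qed

lemma op_meas_F: "(\<lambda>w. opinion Vin E O0 s w k) \<in> borel_measurable FF"
proof -
  have "(\<lambda>w. foldO Vin (sorted_events (evtime w) (events_O E s w)) w O0 k) \<in> borel_measurable FF"
  proof (rule sorted_events_meas[OF countable_edge_index[OF fin]])
    show "Measurable.pred FF (\<lambda>w. x \<in> events_O E s w)" for x by (rule evsO_pred[OF meas_all_F(1)])
    show "(\<lambda>w. evtime w x) \<in> borel_measurable FF" for x by (rule meas_all_F(1))
    show "(\<lambda>w. foldO Vin L w O0 k) \<in> borel_measurable FF" for L
      by (rule foldO_meas_gen[OF meas_all_F(2)])
  qed (use events_O_sub in blast)
  then show ?thesis unfolding opinion_def foldO_def .
qed

lemma BL_sets: "{w \<in> space MM. Lw w = L} \<in> sets FF"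
proof -
  have "(\<lambda>w. sorted_events (evtime w) (events_R E s w) = L) \<in> measurable FF (count_space UNIV)"
  proof (rule sorted_events_meas[OF countable_edge_index[OF fin]])
    show "Measurable.pred FF (\<lambda>w. x \<in> events_R E s w)" for x by (rule evsR_pred[OF meas_all_F(1)])
    show "(\<lambda>w. evtime w x) \<in> borel_measurable FF" for x by (rule meas_all_F(1))
    show "(\<lambda>w. L' = L) \<in> measurable FF (count_space UNIV)" for L' by simp
  qed (use events_R_sub in blast)
  then show ?thesis unfolding Lw_def pred_def[symmetric] by (simp add: pred_def)
qed

end

context ST begin

definition "BL L = GG \<inter> {w \<in> space MM. Lw w = L}"

lemma BL_F: "BL L \<in> sets FF"
  unfolding BL_def using Gset_sets_F[OF fin] BL_sets by auto

lemma BL_iff: "w \<in> BL L \<longleftrightarrow> w \<in> GG \<and> Lw w = L"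
  unfolding BL_def Gset_def by auto

lemma G_V01: "w \<in> GG \<Longrightarrow> x \<in> II \<Longrightarrow> 0 \<le> Vmark w x \<and> Vmark w x \<le> 1"
  unfolding Gset_def Gcond_def by auto

lemma termwise:
  assumes A: "A \<in> sets FF" and L: "set L \<subseteq> II" "distinct L"
  shows "(\<integral>\<^sup>+w. ennreal (indicator (A \<inter> BL L) w * (cc (walkL Vin L w k) + Bc)) \<partial>MM)
       = (\<integral>\<^sup>+w. ennreal (indicator (A \<inter> BL L) w * (foldO Vin L w cc k + Bc)) \<partial>MM)"
proof -
  define H where "H = (indicator (A \<inter> BL L) :: _ \<Rightarrow> real)"
  have AB: "A \<inter> BL L \<in> sets FF" using A BL_F by auto
  have ABM: "A \<inter> BL L \<in> sets MM" using AB sets_NV_sub by auto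
  have Hm[measurable]: "H \<in> borel_measurable MM" unfolding H_def using ABM by simp
  have Hb: "\<bar>H w\<bar> \<le> 1" for w by (simp add: H_def indicator_def)
  have Hinv: "H (w(x := (gap w x, Vmark w x, u))) = H w" if "x \<in> II" "w \<in> space MM" for x w u
    using NV_inv[OF AB that(2) that(1), of u] by (simp add: H_def indicator_def)
  have HG: "w \<in> GG" if "H w \<noteq> 0" for w using that by (auto simp: H_def indicator_def BL_iff)
  have Hsupp: "0 \<le> Vmark w x \<and> Vmark w x \<le> 1" if "H w \<noteq> 0" "x \<in> II" for w x
    using G_V01[OF HG[OF that(1)] that(2)] .
  have core_eq: "(\<integral>w. H w * cc (walkL Vin L w k) \<partial>MM) = (\<integral>w. H w * foldO Vin L w cc k \<partial>MM)"
    by (rule core[OF L(1) L(2) _ Hm Hb Hinv Hsupp cc_bound]) (use L edgesI in auto)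
  have wm[measurable]: "(\<lambda>w. cc (walkL Vin L w k)) \<in> borel_measurable MM"
    by (rule measurable_compose[OF walkL_meas_gen[OF meas_all_M(2) meas_U_all_M]]) simp
  have fm[measurable]: "(\<lambda>w. foldO Vin L w cc k) \<in> borel_measurable MM"
    by (rule foldO_meas_gen[OF meas_all_M(2)])
  have Fb: "\<bar>foldO Vin L w cc k\<bar> \<le> Bc" if "H w \<noteq> 0" for w
    by (rule foldO_bound[OF _ cc_bound]) (use Hsupp[OF that] L in auto)
  have i1: "integrable MM (\<lambda>w. H w * cc (walkL Vin L w k))"
  proof (rule integrable_bdd[where C=Bc])
    fix w
    have "\<bar>H w\<bar> * \<bar>cc (walkL Vin L w k)\<bar> \<le> 1 * Bc" by (intro mult_mono Hb cc_bound) auto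
    then show "\<bar>H w * cc (walkL Vin L w k)\<bar> \<le> Bc" by (simp add: abs_mult)
  qed measurable
  have i2: "integrable MM (\<lambda>w. H w * foldO Vin L w cc k)"
  proof (rule integrable_bdd[where C=Bc])
    fix w
    show "\<bar>H w * foldO Vin L w cc k\<bar> \<le> Bc"
    proof (cases "H w = 0")
      case True then show ?thesis using Bc_nonneg by simp
    next
      case False
      have "\<bar>H w\<bar> * \<bar>foldO Vin L w cc k\<bar> \<le> 1 * Bc" by (intro mult_mono Hb Fb[OF False]) auto
      then show ?thesis by (simp add: abs_mult)
    qed
  qed measurable
  have i3: "integrable MM (\<lambda>w. H w * Bc)"
  proof (rule integrable_bdd[where C=Bc])
    show "(\<lambda>w. H w * Bc) \<in> borel_measurable MM" by measurable
  qed (use Hb Bc_nonneg in \<open>auto simp: abs_mult H_def indicator_def\<close>)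
  have n1: "0 \<le> H w * (cc (walkL Vin L w k) + Bc)" for w
    using cc_bound[of "walkL Vin L w k"] by (auto simp: H_def indicator_def)
  have n2: "0 \<le> H w * (foldO Vin L w cc k + Bc)" for w
  proof (cases "H w = 0")
    case False then show ?thesis using Fb[OF False] by (auto simp: H_def indicator_def)
  qed simp
  have "(\<integral>\<^sup>+w. ennreal (H w * (cc (walkL Vin L w k) + Bc)) \<partial>MM) = ennreal (\<integral>w. H w * (cc (walkL Vin L w k) + Bc) \<partial>MM)"
    by (rule nn_integral_eq_integral) (use i1 i3 n1 in \<open>auto simp: distrib_left\<close>)
  also have "(\<integral>w. H w * (cc (walkL Vin L w k) + Bc) \<partial>MM) = (\<integral>w. H w * cc (walkL Vin L w k) \<partial>MM) + (\<integral>w. H w * Bc \<partial>MM)"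
    unfolding distrib_left by (rule Bochner_Integration.integral_add[OF i1 i3])
  also have "\<dots> = (\<integral>w. H w * foldO Vin L w cc k \<partial>MM) + (\<integral>w. H w * Bc \<partial>MM)"
    by (simp add: core_eq)
  also have "\<dots> = (\<integral>w. H w * (foldO Vin L w cc k + Bc) \<partial>MM)"
    unfolding distrib_left by (rule Bochner_Integration.integral_add[OF i2 i3, symmetric])
  also have "ennreal \<dots> = (\<integral>\<^sup>+w. ennreal (H w * (foldO Vin L w cc k + Bc)) \<partial>MM)"
    by (rule nn_integral_eq_integral[symmetric]) (use i2 i3 n2 in \<open>auto simp: distrib_left\<close>)
  finally show ?thesis unfolding H_def .
qed

end

context ST begin

lemma set_sorted_events_sub: "set (sorted_events tm A) \<subseteq> A"
  using sorted_events_prop[of A tm] by (cases "finite A") (auto simp: sorted_events_def)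

lemma Lw_set_all: "set (Lw w) \<subseteq> II"
  using set_sorted_events_sub[of "evtime w" "events_R E s w"] events_R_sub[of E s w] unfolding Lw_def by blast

lemma f_bound: "\<bar>O0 (backward_walk Vin E s k w)\<bar> \<le> Bc"
proof -
  have "backward_walk Vin E s k w \<in> Vin \<union> Vb" unfolding bw_eq by (rule walk_S[OF Lw_set_all])
  then show ?thesis using cc_bound[of "backward_walk Vin E s k w"] by (simp add: cc_def)
qed

lemma op_bound: "w \<in> GG \<Longrightarrow> \<bar>opinion Vin E O0 s w k\<bar> \<le> Bc"
  unfolding op_eq by (rule foldO_bound[OF _ cc_bound]) (use Lw_set[of w] G_V01[of w] in auto)

lemma op_meas_M[measurable]: "(\<lambda>w. opinion Vin E O0 s w k) \<in> borel_measurable MM"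
  by (rule measurable_from_subalg[OF subalg_NV op_meas_F])

lemma f_meas'[measurable]: "(\<lambda>w. O0 (backward_walk Vin E s k w)) \<in> borel_measurable MM"
  by (rule f_meas)

lemma int_f: "integrable MM (\<lambda>w. O0 (backward_walk Vin E s k w))"
  by (rule integrable_bdd[where C=Bc]) (auto simp: f_bound)

lemma int_op: "integrable MM (\<lambda>w. opinion Vin E O0 s w k)"
proof -
  interpret prob_space MM by (rule prob_base)
  show ?thesis
    by (rule integrable_const_bound[where B=Bc]) (use AE_Gset[OF fin, of s] op_bound in \<open>auto elim: AE_mp\<close>)
qed

lemma main_identity:
  assumes A: "A \<in> sets FF"
  shows "(\<integral>w. indicator A w * O0 (backward_walk Vin E s k w) \<partial>MM) = (\<integral>w. indicator A w * opinion Vin E O0 s w k \<partial>MM)"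
proof -
  define f where "f w = O0 (backward_walk Vin E s k w)" for w
  define opk where "opk w = opinion Vin E O0 s w k" for w
  define Ls where "Ls = {L. set L \<subseteq> II \<and> distinct L}"
  have cLs: "countable Ls"
    by (rule countable_subset[of _ "lists II"]) (use countable_edge_index[OF fin] in \<open>auto simp: Ls_def\<close>)
  have AM: "A \<in> sets MM" using A sets_NV_sub by auto
  have AEG: "AE w in MM. w \<in> GG" by (rule AE_Gset[OF fin])
  have LwLs: "Lw w \<in> Ls" if "w \<in> GG" for w using Lw_set[OF that] Lw_distinct[OF that] by (simp add: Ls_def)
  have BLM: "BL L \<in> sets MM" for L using BL_F sets_NV_sub by auto
  have single: "(\<integral>\<^sup>+L. ennreal (indicator (A \<inter> BL L) w * (h L w + Bc)) \<partial>count_space Ls) = ennreal (indicator A w * (h (Lw w) w + Bc))"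
    if w: "w \<in> GG" for w and h :: "_ \<Rightarrow> _ \<Rightarrow> real"
  proof -
    have "(\<lambda>L. ennreal (indicator (A \<inter> BL L) w * (h L w + Bc))) = (\<lambda>L. ennreal (indicator A w * (h (Lw w) w + Bc)) * indicator {Lw w} L)"
      using w by (auto simp: BL_iff indicator_def fun_eq_iff)
    then show ?thesis using LwLs[OF w] by simp
  qed
  have mf: "(\<lambda>w. ennreal (indicator (A \<inter> BL L) w * (cc (walkL Vin L w k) + Bc))) \<in> borel_measurable MM" for L
  proof -
    have [measurable]: "(\<lambda>w. cc (walkL Vin L w k)) \<in> borel_measurable MM"
      by (rule measurable_compose[OF walkL_meas_gen[OF meas_all_M(2) meas_U_all_M]]) simp
    have [measurable]: "A \<inter> BL L \<in> sets MM" using AM BLM by auto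
    show ?thesis by measurable
  qed
  have mg: "(\<lambda>w. ennreal (indicator (A \<inter> BL L) w * (foldO Vin L w cc k + Bc))) \<in> borel_measurable MM" for L
  proof -
    have [measurable]: "(\<lambda>w. foldO Vin L w cc k) \<in> borel_measurable MM"
      by (rule foldO_meas_gen[OF meas_all_M(2)])
    have [measurable]: "A \<inter> BL L \<in> sets MM" using AM BLM by auto
    show ?thesis by measurable
  qed
  have "(\<integral>\<^sup>+w. ennreal (indicator A w * (f w + Bc)) \<partial>MM)
      = (\<integral>\<^sup>+w. (\<integral>\<^sup>+L. ennreal (indicator (A \<inter> BL L) w * (cc (walkL Vin L w k) + Bc)) \<partial>count_space Ls) \<partial>MM)"
  proof (rule nn_integral_cong_AE)
    show "AE w in MM. ennreal (indicator A w * (f w + Bc)) = (\<integral>\<^sup>+L. ennreal (indicator (A \<inter> BL L) w * (cc (walkL Vin L w k) + Bc)) \<partial>count_space Ls)"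
      using AEG
    proof eventually_elim
      case (elim w)
      show ?case using single[OF elim, of "\<lambda>L w. cc (walkL Vin L w k)"] f_eq[OF elim] by (simp add: f_def)
    qed
  qed
  also have "\<dots> = (\<integral>\<^sup>+L. (\<integral>\<^sup>+w. ennreal (indicator (A \<inter> BL L) w * (cc (walkL Vin L w k) + Bc)) \<partial>MM) \<partial>count_space Ls)"
    by (rule nn_integral_count_space_nn_integral[OF cLs mf])
  also have "\<dots> = (\<integral>\<^sup>+L. (\<integral>\<^sup>+w. ennreal (indicator (A \<inter> BL L) w * (foldO Vin L w cc k + Bc)) \<partial>MM) \<partial>count_space Ls)"
    by (rule nn_integral_cong) (use termwise[OF A] in \<open>auto simp: Ls_def\<close>)
  also have "\<dots> = (\<integral>\<^sup>+w. (\<integral>\<^sup>+L. ennreal (indicator (A \<inter> BL L) w * (foldO Vin L w cc k + Bc)) \<partial>count_space Ls) \<partial>MM)"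
    by (rule nn_integral_count_space_nn_integral[OF cLs mg, symmetric])
  also have "\<dots> = (\<integral>\<^sup>+w. ennreal (indicator A w * (opk w + Bc)) \<partial>MM)"
  proof (rule nn_integral_cong_AE)
    show "AE w in MM. (\<integral>\<^sup>+L. ennreal (indicator (A \<inter> BL L) w * (foldO Vin L w cc k + Bc)) \<partial>count_space Ls) = ennreal (indicator A w * (opk w + Bc))"
      using AEG
    proof eventually_elim
      case (elim w)
      show ?case using single[OF elim, of "\<lambda>L w. foldO Vin L w cc k"] op_eq[OF elim] by (simp add: opk_def)
    qed
  qed
  finally have eqnn: "(\<integral>\<^sup>+w. ennreal (indicator A w * (f w + Bc)) \<partial>MM) = (\<integral>\<^sup>+w. ennreal (indicator A w * (opk w + Bc)) \<partial>MM)" .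
  have if1: "integrable MM (\<lambda>w. indicator A w * f w)"
    unfolding f_def using integrable_mult_indicator[OF AM int_f] by simp
  have io1: "integrable MM (\<lambda>w. indicator A w * opk w)"
    unfolding opk_def using integrable_mult_indicator[OF AM int_op] by simp
  have ic: "integrable MM (\<lambda>w. indicator A w * Bc)"
    using integrable_mult_indicator[OF AM integrable_bdd[where C="\<bar>Bc\<bar>" and f="\<lambda>_. Bc"]] by simp
  have nf: "AE w in MM. 0 \<le> indicator A w * (f w + Bc)"
  proof (rule AE_I2)
    fix w
    show "0 \<le> indicator A w * (f w + Bc)" using f_bound[of w] by (auto simp: f_def indicator_def)
  qed
  have no: "AE w in MM. 0 \<le> indicator A w * (opk w + Bc)"
    using AEG
  proof eventually_elim
    case (elim w)
    show ?case using op_bound[OF elim] by (auto simp: opk_def indicator_def)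
  qed
  have intf: "integrable MM (\<lambda>w. indicator A w * (f w + Bc))"
    using if1 ic by (simp add: distrib_left)
  have into: "integrable MM (\<lambda>w. indicator A w * (opk w + Bc))"
    using io1 ic by (simp add: distrib_left)
  have "ennreal (\<integral>w. indicator A w * (f w + Bc) \<partial>MM) = ennreal (\<integral>w. indicator A w * (opk w + Bc) \<partial>MM)"
    using eqnn nn_integral_eq_integral[OF intf nf] nn_integral_eq_integral[OF into no] by simp
  moreover have "0 \<le> (\<integral>w. indicator A w * (f w + Bc) \<partial>MM)" by (rule integral_nonneg_AE[OF nf])
  moreover have "0 \<le> (\<integral>w. indicator A w * (opk w + Bc) \<partial>MM)" by (rule integral_nonneg_AE[OF no])
  ultimately have eqr: "(\<integral>w. indicator A w * (f w + Bc) \<partial>MM) = (\<integral>w. indicator A w * (opk w + Bc) \<partial>MM)"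
    by simp
  have "(\<integral>w. indicator A w * (f w + Bc) \<partial>MM) = (\<integral>w. indicator A w * f w \<partial>MM) + (\<integral>w. indicator A w * Bc \<partial>MM)"
    unfolding distrib_left by (rule Bochner_Integration.integral_add[OF if1 ic])
  moreover have "(\<integral>w. indicator A w * (opk w + Bc) \<partial>MM) = (\<integral>w. indicator A w * opk w \<partial>MM) + (\<integral>w. indicator A w * Bc \<partial>MM)"
    unfolding distrib_left by (rule Bochner_Integration.integral_add[OF io1 ic])
  ultimately show ?thesis using eqr by (simp add: f_def opk_def)
qed

lemma final: "AE w in MM. opinion Vin E O0 s w k = real_cond_exp MM FF (\<lambda>w'. O0 (backward_walk Vin E s k w')) w"
proof -
  interpret prob_space MM by (rule prob_base)
  interpret finite_measure_subalgebra MM FF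
    by unfold_locales (rule subalg_NV)
  have "AE w in MM. real_cond_exp MM FF (\<lambda>w'. O0 (backward_walk Vin E s k w')) w = opinion Vin E O0 s w k"
  proof (rule real_cond_exp_charact)
    fix A assume "A \<in> sets FF"
    then show "(\<integral>w\<in>A. O0 (backward_walk Vin E s k w) \<partial>MM) = (\<integral>w\<in>A. opinion Vin E O0 s w k \<partial>MM)"
      unfolding set_lebesgue_integral_def using main_identity by simp
  qed (auto intro: int_f int_op op_meas_F)
  then show ?thesis by (auto elim: AE_mp)
qed

end

theorem mainTheorem7:
  fixes Vin Vb :: "'v set" and E :: "('v \<times> 'v) set"
    and T O0 :: "'v \<Rightarrow> real" and s :: real and k :: 'v
  assumes "finite Vin" and "finite Vb" and "Vin \<inter> Vb = {}" and "finite E"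
    and "\<forall>(i, j)\<in>E. i \<in> Vin \<and> j \<in> Vin \<union> Vb"
    and "\<forall>j\<in>Vb. T j > 0"
    and "\<forall>j\<in>Vb. O0 j = T j"
    and "s > 0"
    and "k \<in> Vin \<union> Vb"
  shows "AE \<omega> in base_space (edge_index E).
           opinion Vin E O0 s \<omega> k =
           real_cond_exp (base_space (edge_index E)) (NV_algebra E)
             (\<lambda>\<omega>'. O0 (backward_walk Vin E s k \<omega>')) \<omega>"
  proof -
  interpret ST Vin Vb E O0 s k
    by unfold_locales (use assms in auto)
  show ?thesis by (rule final)
qed

end
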